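(* Let $\mathcal{H}$ be a finite-dimensional Hilbert space, $\{\rho_\theta;\theta\in\Theta\subset\mathbb{R}^2\}$ a smooth two-parameter family of density operators, $\theta_0\in\Theta$ with $\rho=\rho_{\theta_0}$ strictly positive, and suppose there exists a three-dimensional real subspace $\tilde{\mathcal{T}}$ of Hermitian operators with $\operatorname{span}_{\mathbb{R}}\{L_1^{(S)},L_2^{(S)}\}\subset\tilde{\mathcal{T}}$ and $\mathcal{D}_\rho(\tilde{\mathcal{T}})\subset\tilde{\mathcal{T}}$. Then for every $2\times2$ real positive matrix $G$, $$C^{(H)}_{\theta_0,G}=\max_{0\le\beta\le1}C^{(\beta)}_{\theta_0,G}=\begin{cases}C^{(1)}_{\theta_0,G}&\text{if }\hat\beta\ge1,\\ C^{(\hat\beta)}_{\theta_0,G}&\text{otherwise,}\end{cases}$$ where $\hat\beta=\dfrac{\operatorname{Tr}|\sqrt G\,\operatorname{Im}(J^{(R)}_{\theta_0})^{-1}\sqrt G|}{2\operatorname{Tr}G\{(J^{(S)}_{\theta_0})^{-1}-\operatorname{Re}((J^{(R)}_{\theta_0})^{-1})\}}$ if $(J^{(S)}_{\theta_0})^{-1}\ne\operatorname{Re}((J^{(R)}_{\theta_0})^{-1})$ and $\hat\beta=\infty$ otherwise.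
   Context: $\partial_i\rho=\frac{\partial}{\partial\theta^i}\rho_\theta|_{\theta=\theta_0}$. Commutation operator: $\mathcal{D}_\rho(X)\rho+\rho\mathcal{D}_\rho(X)=\sqrt{-1}(X\rho-\rho X)$. For $\beta\in[0,1]$, $L_i^{(\beta)}$ is defined by $\partial_i\rho=\frac{1+\beta}{2}\rho L_i^{(\beta)}+\frac{1-\beta}{2}L_i^{(\beta)}\rho$; $L_i^{(S)}=L_i^{(0)}$ (SLD, assumed linearly independent), $L_i^{(R)}=L_i^{(1)}$ (RLD). $J^{(\beta)}_{\theta_0}=[\operatorname{Tr}\partial_i\rho\,L_j^{(\beta)}]_{ij}$, $J^{(S)}=J^{(0)}$, $J^{(R)}=J^{(1)}$, $C^{(\beta)}_{\theta_0,G}=\operatorname{Tr}G(J^{(\beta)}_{\theta_0})^{-1}+\operatorname{Tr}|\sqrt G\,\operatorname{Im}(J^{(\beta)}_{\theta_0})^{-1}\sqrt G|$. Holevo bound: $C^{(H)}_{\theta_0,G}=\min_B\{\operatorname{Tr}GZ(B)+\operatorname{Tr}|\sqrt G\operatorname{Im}Z(B)\sqrt G|\}$ over Hermitian $B_1,B_2$ with $\operatorname{Tr}\partial_i\rho\,B_j=\delta_{ij}$, $Z_{ij}(B)=\operatorname{Tr}\rho B_jB_i$. Re, Im entrywise; $|X|=(X^*X)^{1/2}$. *)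

theory Defs
  imports "HOL-Analysis.Analysis"
begin

text \<open>Operators on a finite-dimensional Hilbert space are complex matrices indexed by a
finite type 'n. Parameter-space objects (2x2 matrices) are indexed by the type 2.\<close>

definition mtr :: "'a::comm_monoid_add^'n^'n \<Rightarrow> 'a" where
  "mtr A = (\<Sum>i\<in>UNIV. A$i$i)"

definition cadj :: "complex^'n^'m \<Rightarrow> complex^'m^'n" where
  "cadj A = (\<chi> i j. cnj (A$j$i))"

definition hermitian :: "complex^'n^'n \<Rightarrow> bool" where
  "hermitian A \<longleftrightarrow> cadj A = A"

definition cquad :: "complex^'n^'n \<Rightarrow> complex^'n \<Rightarrow> complex" where
  "cquad A x = (\<Sum>i\<in>UNIV. cnj (x$i) * (A *v x)$i)"

definition pos_semidef :: "complex^'n^'n \<Rightarrow> bool" where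
  "pos_semidef A \<longleftrightarrow> hermitian A \<and> (\<forall>x. 0 \<le> Re (cquad A x))"

definition strictly_pos :: "complex^'n^'n \<Rightarrow> bool" where
  "strictly_pos A \<longleftrightarrow> hermitian A \<and> (\<forall>x. x \<noteq> 0 \<longrightarrow> 0 < Re (cquad A x))"

definition density_op :: "complex^'n^'n \<Rightarrow> bool" where
  "density_op A \<longleftrightarrow> pos_semidef A \<and> mtr A = 1"

definition mRe :: "complex^'n^'m \<Rightarrow> real^'n^'m" where
  "mRe A = (\<chi> i j. Re (A$i$j))"

definition mIm :: "complex^'n^'m \<Rightarrow> real^'n^'m" where
  "mIm A = (\<chi> i j. Im (A$i$j))"

definition cmat :: "real^'n^'m \<Rightarrow> complex^'n^'m" where
  "cmat A = (\<chi> i j. complex_of_real (A$i$j))"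

definition real_psd :: "real^'n^'n \<Rightarrow> bool" where
  "real_psd A \<longleftrightarrow> transpose A = A \<and> (\<forall>x. 0 \<le> x \<bullet> (A *v x))"

definition real_pos_def :: "real^'n^'n \<Rightarrow> bool" where
  "real_pos_def A \<longleftrightarrow> transpose A = A \<and> (\<forall>x. x \<noteq> 0 \<longrightarrow> 0 < x \<bullet> (A *v x))"

definition msqrt :: "real^'n^'n \<Rightarrow> real^'n^'n" where
  "msqrt A = (THE S. real_psd S \<and> S ** S = A)"

definition mabs :: "real^'n^'n \<Rightarrow> real^'n^'n" where
  "mabs X = msqrt (transpose X ** X)"

definition cscale :: "complex \<Rightarrow> complex^'n^'m \<Rightarrow> complex^'n^'m" where
  "cscale c A = (\<chi> i j. c * A$i$j)"

definition comm_op :: "complex^'n^'n \<Rightarrow> complex^'n^'n \<Rightarrow> complex^'n^'n" where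
  "comm_op \<rho> X = (THE Y. Y ** \<rho> + \<rho> ** Y = cscale \<i> (X ** \<rho> - \<rho> ** X))"

definition logder :: "real \<Rightarrow> complex^'n^'n \<Rightarrow> complex^'n^'n \<Rightarrow> complex^'n^'n" where
  "logder \<beta> \<rho> dR = (THE L. dR = cscale (complex_of_real ((1 + \<beta>) / 2)) (\<rho> ** L)
                                 + cscale (complex_of_real ((1 - \<beta>) / 2)) (L ** \<rho>))"

definition Jmat :: "real \<Rightarrow> complex^'n^'n \<Rightarrow> (2 \<Rightarrow> complex^'n^'n) \<Rightarrow> complex^2^2" where
  "Jmat \<beta> \<rho> dR = (\<chi> i j. mtr (dR i ** logder \<beta> \<rho> (dR j)))"

definition Cbeta :: "real \<Rightarrow> real^2^2 \<Rightarrow> complex^'n^'n \<Rightarrow> (2 \<Rightarrow> complex^'n^'n) \<Rightarrow> real" where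
  "Cbeta \<beta> G \<rho> dR =
     (let Ji = matrix_inv (Jmat \<beta> \<rho> dR) in
      Re (mtr (cmat G ** Ji)) + mtr (mabs (msqrt G ** mIm Ji ** msqrt G)))"

definition Zmat :: "complex^'n^'n \<Rightarrow> (2 \<Rightarrow> complex^'n^'n) \<Rightarrow> complex^2^2" where
  "Zmat \<rho> B = (\<chi> i j. mtr (\<rho> ** B j ** B i))"

definition holevo :: "real^2^2 \<Rightarrow> complex^'n^'n \<Rightarrow> (2 \<Rightarrow> complex^'n^'n) \<Rightarrow> real" where
  "holevo G \<rho> dR = Inf {Re (mtr (cmat G ** Zmat \<rho> B)) + mtr (mabs (msqrt G ** mIm (Zmat \<rho> B) ** msqrt G))
     | B. (\<forall>j. hermitian (B j)) \<and> (\<forall>i j. mtr (dR i ** B j) = (if i = j then 1 else 0))}"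

definition beta_hat :: "real^2^2 \<Rightarrow> complex^'n^'n \<Rightarrow> (2 \<Rightarrow> complex^'n^'n) \<Rightarrow> ereal" where
  "beta_hat G \<rho> dR =
     (let JSi = matrix_inv (Jmat 0 \<rho> dR); JRi = matrix_inv (Jmat 1 \<rho> dR) in
      if JSi = cmat (mRe JRi) then \<infinity>
      else ereal (mtr (mabs (msqrt G ** mIm JRi ** msqrt G))
                  / (2 * Re (mtr (cmat G ** (JSi - cmat (mRe JRi)))))))"

end

theory Submission
  imports Defs
begin


lemma mtr_trace: "mtr A = trace A" by (simp add: mtr_def trace_def)

lemma mtr_add: "mtr ((A::complex^'n^'n) + B) = mtr A + mtr B"
  by (simp add: mtr_def sum.distrib)
lemma mtr_diff: "mtr ((A::complex^'n^'n) - B) = mtr A - mtr B"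
  by (simp add: mtr_def sum_subtractf)
lemma mtr_comm: "mtr ((A::complex^'n^'n) ** B) = mtr (B ** A)"
  unfolding mtr_trace by (rule trace_mul_sym)
lemma mtr_cscale: "mtr (cscale c (A::complex^'n^'n)) = c * mtr A"
  by (simp add: mtr_def cscale_def sum_distrib_left)
lemma mtr_sum: "finite S \<Longrightarrow> mtr (sum (f::_\<Rightarrow>complex^'n^'n) S) = (\<Sum>x\<in>S. mtr (f x))"
  by (simp add: mtr_def sum_component) (rule sum.swap)

lemma cscale_mult_left: "cscale c (A ** B) = cscale c A ** (B::complex^'n^'n)"
  by (simp add: cscale_def matrix_matrix_mult_def vec_eq_iff sum_distrib_left mult.assoc)
lemma cscale_mult_right: "cscale c (A ** B) = A ** cscale c (B::complex^'n^'n)"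
  by (simp add: cscale_def matrix_matrix_mult_def vec_eq_iff sum_distrib_left algebra_simps)
lemma cscale_add: "cscale c (A + B) = cscale c A + cscale c (B::complex^'n^'n)"
  by (simp add: cscale_def vec_eq_iff algebra_simps)
lemma cscale_diff: "cscale c (A - B) = cscale c A - cscale c (B::complex^'n^'n)"
  by (simp add: cscale_def vec_eq_iff algebra_simps)
lemma cscale_add_left: "cscale (c + d) A = cscale c A + cscale d (A::complex^'n^'n)"
  by (simp add: cscale_def vec_eq_iff algebra_simps)
lemma cscale_cscale: "cscale c (cscale d A) = cscale (c * d) (A::complex^'n^'n)"
  by (simp add: cscale_def vec_eq_iff algebra_simps)
lemma cscale_one[simp]: "cscale 1 A = A" by (simp add: cscale_def vec_eq_iff)
lemma cscale_zero[simp]: "cscale 0 A = 0" by (simp add: cscale_def vec_eq_iff)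
lemma cscale_0[simp]: "cscale c 0 = 0" by (simp add: cscale_def vec_eq_iff)
lemma scaleR_cscale: "r *\<^sub>R (A::complex^'n^'n) = cscale (complex_of_real r) A"
  apply (simp add: cscale_def vec_eq_iff) by (simp add: scaleR_conv_of_real)
lemma cscale_minus: "cscale c (- A) = - cscale c (A::complex^'n^'n)"
  by (simp add: cscale_def vec_eq_iff)
lemma cscale_neg: "cscale (- c) A = - cscale c (A::complex^'n^'n)"
  by (simp add: cscale_def vec_eq_iff)

lemma cadj_mult: "cadj ((A::complex^'n^'n) ** B) = cadj B ** cadj A"
  by (simp add: cadj_def matrix_matrix_mult_def vec_eq_iff mult.commute)
lemma cadj_add: "cadj ((A::complex^'n^'n) + B) = cadj A + cadj B"
  by (simp add: cadj_def vec_eq_iff)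
lemma cadj_diff: "cadj ((A::complex^'n^'n) - B) = cadj A - cadj B"
  by (simp add: cadj_def vec_eq_iff)
lemma cadj_cadj[simp]: "cadj (cadj (A::complex^'n^'n)) = A"
  by (simp add: cadj_def vec_eq_iff)
lemma cadj_cscale: "cadj (cscale c (A::complex^'n^'n)) = cscale (cnj c) (cadj A)"
  by (simp add: cadj_def cscale_def vec_eq_iff)
lemma mtr_cadj: "mtr (cadj (A::complex^'n^'n)) = cnj (mtr A)"
  by (simp add: cadj_def mtr_def)
lemma cadj_0[simp]: "cadj 0 = 0" by (simp add: cadj_def vec_eq_iff)

lemma herm_add: "hermitian A \<Longrightarrow> hermitian B \<Longrightarrow> hermitian (A + B)"
  by (simp add: hermitian_def cadj_add)
lemma herm_scaleR: "hermitian A \<Longrightarrow> hermitian (cscale (complex_of_real r) A)"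
  by (simp add: hermitian_def cadj_cscale)

lemma test: "linear (f::complex^'n^'n \<Rightarrow> complex^'n^'n) \<Longrightarrow> inj f \<Longrightarrow> surj f"
  by (rule linear_injective_imp_surjective) auto


lemma matrix_add_rdistrib: "((B + C) ** A) = (B ** A) + (C ** (A::'a::semiring_1^_^_))"
  by (vector matrix_matrix_mult_def sum.distrib[symmetric] field_simps)
lemma matrix_diff_ldistrib: "(A ** (B - C)) = (A ** B) - (A ** (C::'a::ring_1^_^_))"
  by (vector matrix_matrix_mult_def sum_subtractf[symmetric] field_simps)
lemma matrix_diff_rdistrib: "((B - C) ** A) = (B ** A) - (C ** (A::'a::ring_1^_^_))"
  by (vector matrix_matrix_mult_def sum_subtractf[symmetric] field_simps)

definition col :: "complex^'n^'n \<Rightarrow> 'n \<Rightarrow> complex^'n" where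
  "col L i = (\<chi> j. L$j$i)"

lemma mtr_quad: "mtr (cadj (L::complex^'n^'n) ** (A ** L)) = (\<Sum>i\<in>UNIV. cquad A (col L i))"
  by (simp add: mtr_def cquad_def col_def matrix_matrix_mult_def matrix_vector_mult_def cadj_def)

lemma psd_tr_nonneg:
  assumes "\<forall>x. 0 \<le> Re (cquad A x)"
  shows "0 \<le> Re (mtr (cadj (L::complex^'n^'n) ** (A ** L)))"
  unfolding mtr_quad Re_sum using assms by (simp add: sum_nonneg)

lemma spd_tr_pos:
  assumes "\<forall>x. x \<noteq> 0 \<longrightarrow> 0 < Re (cquad A x)" "(L::complex^'n^'n) \<noteq> 0"
  shows "0 < Re (mtr (cadj L ** (A ** L)))"
proof -
  obtain j i where ji: "L$j$i \<noteq> 0" using assms(2) by (metis vec_eq_iff zero_index)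
  have ci: "col L i \<noteq> 0" using ji by (metis col_def vec_lambda_beta zero_index)
  have nn: "\<forall>x. 0 \<le> Re (cquad A x)"
  proof
    fix x show "0 \<le> Re (cquad A x)"
    proof (cases "x = 0")
      case True then show ?thesis by (simp add: cquad_def)
    next
      case False with assms(1) show ?thesis by (simp add: less_imp_le)
    qed
  qed
  show ?thesis unfolding mtr_quad Re_sum
    by (rule sum_pos2[where i=i]) (use ci assms(1) nn in auto)
qed

definition Phi :: "complex^'n^'n \<Rightarrow> real \<Rightarrow> real \<Rightarrow> complex^'n^'n \<Rightarrow> complex^'n^'n" where
  "Phi \<rho> a b L = cscale (complex_of_real a) (\<rho> ** L) + cscale (complex_of_real b) (L ** \<rho>)"

lemma Phi_linear: "linear (Phi \<rho> a b)"
  apply (rule linearI)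
   apply (simp add: Phi_def matrix_add_ldistrib matrix_add_rdistrib cscale_add)
  apply (simp add: Phi_def scaleR_cscale cscale_mult_left[symmetric] cscale_mult_right[symmetric] cscale_cscale cscale_add mult.commute)
  done

lemma strictly_pos_psd: "strictly_pos A \<Longrightarrow> \<forall>x. 0 \<le> Re (cquad A x)"
proof
  fix x assume "strictly_pos A"
  then show "0 \<le> Re (cquad A x)"
  proof (cases "x = 0")
    case True then show ?thesis by (simp add: cquad_def)
  next
    case False with \<open>strictly_pos A\<close> show ?thesis by (simp add: strictly_pos_def less_imp_le)
  qed
qed

lemma Phi_inj:
  assumes sp: "strictly_pos \<rho>" and a: "a > 0" and b: "b \<ge> 0"
  shows "inj (Phi \<rho> a b)"
proof -
  have h: "hermitian \<rho>" using sp strictly_pos_def by blast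
  have "L = 0" if "Phi \<rho> a b L = 0" for L
  proof (rule ccontr)
    assume L: "L \<noteq> 0"
    have p1: "0 < Re (mtr (cadj L ** (\<rho> ** L)))"
      using spd_tr_pos sp L strictly_pos_def by blast
    have "mtr (cadj L ** (L ** \<rho>)) = mtr ((L ** \<rho>) ** cadj L)" by (rule mtr_comm)
    also have "\<dots> = mtr (cadj (cadj L) ** (\<rho> ** cadj L))" by (simp add: matrix_mul_assoc)
    finally have p2: "0 \<le> Re (mtr (cadj L ** (L ** \<rho>)))"
      using psd_tr_nonneg[OF strictly_pos_psd[OF sp], of "cadj L"] by simp
    have "0 = mtr (cadj L ** Phi \<rho> a b L)" using that by (simp add: mtr_def)
    also have "\<dots> = complex_of_real a * mtr (cadj L ** (\<rho> ** L)) + complex_of_real b * mtr (cadj L ** (L ** \<rho>))"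
      by (simp add: Phi_def matrix_add_ldistrib mtr_add cscale_mult_right[symmetric] mtr_cscale)
    finally have eq: "0 = complex_of_real a * mtr (cadj L ** (\<rho> ** L)) + complex_of_real b * mtr (cadj L ** (L ** \<rho>))" .
    have "0 = a * Re (mtr (cadj L ** (\<rho> ** L))) + b * Re (mtr (cadj L ** (L ** \<rho>)))"
      using arg_cong[OF eq, of Re] by simp
    moreover have "0 < a * Re (mtr (cadj L ** (\<rho> ** L)))" using a p1 by simp
    moreover have "0 \<le> b * Re (mtr (cadj L ** (L ** \<rho>)))" using b p2 by simp
    ultimately show False by linarith
  qed
  then show ?thesis using linear_injective_0[OF Phi_linear] by blast
qed

lemma Phi_bij:
  assumes "strictly_pos \<rho>" "a > 0" "b \<ge> 0"
  shows "\<exists>!L. Phi \<rho> a b L = Y"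
proof -
  have i: "inj (Phi \<rho> a b)" by (rule Phi_inj[OF assms])
  have "surj (Phi \<rho> a b)" by (rule linear_injective_imp_surjective[OF Phi_linear i]) auto
  then show ?thesis using i by (metis injD surjD)
qed



lemma cscale_nth[simp]: "(cscale c A)$i$j = c * A$i$j" by (simp add: cscale_def)

lemma comm_op_ex:
  assumes "strictly_pos \<rho>"
  shows "\<exists>!Y. Y ** \<rho> + \<rho> ** Y = cscale \<i> (X ** \<rho> - \<rho> ** X)"
proof -
  have e: "\<And>Y. Phi \<rho> 1 1 Y = Y ** \<rho> + \<rho> ** Y" by (simp add: Phi_def add.commute)
  show ?thesis using Phi_bij[OF assms, of 1 1 "cscale \<i> (X ** \<rho> - \<rho> ** X)"] unfolding e by simp
qed

lemma comm_op_eq: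
  assumes "strictly_pos \<rho>"
  shows "comm_op \<rho> X ** \<rho> + \<rho> ** comm_op \<rho> X = cscale \<i> (X ** \<rho> - \<rho> ** X)"
  unfolding comm_op_def by (rule theI'[OF comm_op_ex[OF assms]])

lemma comm_op_unique:
  assumes "strictly_pos \<rho>" "Y ** \<rho> + \<rho> ** Y = cscale \<i> (X ** \<rho> - \<rho> ** X)"
  shows "comm_op \<rho> X = Y"
  unfolding comm_op_def by (rule the1_equality[OF comm_op_ex[OF assms(1)] assms(2)])

lemma comm_op_add:
  assumes sp: "strictly_pos \<rho>"
  shows "comm_op \<rho> (X + Y) = comm_op \<rho> X + comm_op \<rho> Y"
proof (rule comm_op_unique[OF sp])
  have "(comm_op \<rho> X + comm_op \<rho> Y) ** \<rho> + \<rho> ** (comm_op \<rho> X + comm_op \<rho> Y)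
     = (comm_op \<rho> X ** \<rho> + \<rho> ** comm_op \<rho> X) + (comm_op \<rho> Y ** \<rho> + \<rho> ** comm_op \<rho> Y)"
    by (simp only: matrix_add_ldistrib matrix_add_rdistrib) (simp only: ac_simps)
  also have "\<dots> = cscale \<i> (X ** \<rho> - \<rho> ** X) + cscale \<i> (Y ** \<rho> - \<rho> ** Y)"
    by (simp only: comm_op_eq[OF sp])
  also have "\<dots> = cscale \<i> ((X + Y) ** \<rho> - \<rho> ** (X + Y))"
    by (simp only: cscale_add[symmetric] matrix_add_ldistrib matrix_add_rdistrib) (simp add: algebra_simps)
  finally show "(comm_op \<rho> X + comm_op \<rho> Y) ** \<rho> + \<rho> ** (comm_op \<rho> X + comm_op \<rho> Y) = cscale \<i> ((X + Y) ** \<rho> - \<rho> ** (X + Y))" .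
qed

lemma comm_op_cscale:
  assumes sp: "strictly_pos \<rho>"
  shows "comm_op \<rho> (cscale c X) = cscale c (comm_op \<rho> X)"
proof (rule comm_op_unique[OF sp])
  have "cscale c (comm_op \<rho> X) ** \<rho> + \<rho> ** cscale c (comm_op \<rho> X) = cscale c (comm_op \<rho> X ** \<rho> + \<rho> ** comm_op \<rho> X)"
    by (simp only: cscale_mult_left[symmetric] cscale_mult_right[symmetric] cscale_add)
  also have "\<dots> = cscale c (cscale \<i> (X ** \<rho> - \<rho> ** X))" by (simp only: comm_op_eq[OF sp])
  also have "\<dots> = cscale \<i> (cscale c (X ** \<rho>) - cscale c (\<rho> ** X))"
    by (simp only: cscale_cscale mult.commute[of c] cscale_diff)
  also have "\<dots> = cscale \<i> (cscale c X ** \<rho> - \<rho> ** cscale c X)"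
    by (simp only: cscale_mult_left[symmetric] cscale_mult_right[symmetric])
  finally show "cscale c (comm_op \<rho> X) ** \<rho> + \<rho> ** cscale c (comm_op \<rho> X) = cscale \<i> (cscale c X ** \<rho> - \<rho> ** cscale c X)" .
qed

lemma logder_ex:
  assumes "strictly_pos \<rho>" "0 \<le> \<beta>" "\<beta> \<le> 1"
  shows "\<exists>!L. dR = cscale (complex_of_real ((1 + \<beta>) / 2)) (\<rho> ** L)
                                 + cscale (complex_of_real ((1 - \<beta>) / 2)) (L ** \<rho>)"
proof -
  have "\<exists>!L. Phi \<rho> ((1 + \<beta>) / 2) ((1 - \<beta>) / 2) L = dR"
    by (rule Phi_bij) (use assms in auto)
  then obtain L where L: "Phi \<rho> ((1 + \<beta>) / 2) ((1 - \<beta>) / 2) L = dR"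
     and u: "\<And>M. Phi \<rho> ((1 + \<beta>) / 2) ((1 - \<beta>) / 2) M = dR \<Longrightarrow> M = L" by blast
  show ?thesis
    apply (rule ex1I[of _ L])
    using L apply (simp add: Phi_def)
    using u unfolding Phi_def by (metis (no_types))
qed

lemma logder_eq:
  assumes "strictly_pos \<rho>" "0 \<le> \<beta>" "\<beta> \<le> 1"
  shows "Phi \<rho> ((1 + \<beta>) / 2) ((1 - \<beta>) / 2) (logder \<beta> \<rho> dR) = dR"
  unfolding Phi_def logder_def using theI'[OF logder_ex[OF assms, of dR]] by simp

lemma logder_unique:
  assumes "strictly_pos \<rho>" "0 \<le> \<beta>" "\<beta> \<le> 1" "Phi \<rho> ((1 + \<beta>) / 2) ((1 - \<beta>) / 2) L = dR"
  shows "logder \<beta> \<rho> dR = L"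
  unfolding logder_def using the1_equality[OF logder_ex[OF assms(1-3), of dR], of L] assms(4)
  unfolding Phi_def by simp

definition jp :: "complex^'n^'n \<Rightarrow> complex^'n^'n \<Rightarrow> complex^'n^'n" where
  "jp \<rho> X = Phi \<rho> (1/2) (1/2) X"

lemma logder0_eq: "strictly_pos \<rho> \<Longrightarrow> jp \<rho> (logder 0 \<rho> dR) = dR"
  using logder_eq[of \<rho> 0 dR] by (simp add: jp_def)

lemma Phi_jp:
  assumes sp: "strictly_pos \<rho>"
  shows "Phi \<rho> ((1 + \<beta>) / 2) ((1 - \<beta>) / 2) X = jp \<rho> (X + cscale (\<i> * complex_of_real \<beta>) (comm_op \<rho> X))"
proof -
  define DX where "DX = comm_op \<rho> X"
  have E: "(DX ** \<rho>)$i$j + (\<rho> ** DX)$i$j = \<i> * ((X ** \<rho>)$i$j - (\<rho> ** DX)$i$j + (\<rho> ** DX)$i$j - (\<rho> ** X)$i$j)" for i j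
    using arg_cong[OF comm_op_eq[OF sp, of X], of "\<lambda>M. M$i$j"] unfolding DX_def[symmetric]
    by (simp add: cscale_def)
  have E2: "(\<rho> ** DX)$i$j = \<i> * ((X ** \<rho>)$i$j - (\<rho> ** X)$i$j) - (DX ** \<rho>)$i$j" for i j
    using E[of i j] by (simp add: algebra_simps)
  show ?thesis unfolding DX_def[symmetric] jp_def Phi_def
    by (simp add: vec_eq_iff matrix_add_ldistrib matrix_add_rdistrib cscale_mult_left[symmetric] cscale_mult_right[symmetric] E2
      algebra_simps) (simp add: field_simps)
qed

definition gg :: "complex^'n^'n \<Rightarrow> complex^'n^'n \<Rightarrow> complex^'n^'n \<Rightarrow> complex" where
  "gg \<rho> X Y = mtr (jp \<rho> X ** Y)"

lemma gg_expand: "gg \<rho> X Y = (mtr (\<rho> ** (X ** Y)) + mtr (\<rho> ** (Y ** X))) / 2"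
proof -
  have "mtr (X ** \<rho> ** Y) = mtr (\<rho> ** (Y ** X))"
    using mtr_comm[of X "\<rho> ** Y"] by (simp add: matrix_mul_assoc)
  then show ?thesis
    by (simp add: gg_def jp_def Phi_def matrix_add_rdistrib mtr_add cscale_mult_left[symmetric] mtr_cscale matrix_mul_assoc)
qed

lemma gg_sym: "gg \<rho> X Y = gg \<rho> Y X"
  by (simp add: gg_expand add.commute)

lemma gg_add2: "gg \<rho> X (Y + Z) = gg \<rho> X Y + gg \<rho> X Z"
  by (simp add: gg_def matrix_add_ldistrib mtr_add)
lemma gg_add1: "gg \<rho> (Y + Z) X = gg \<rho> Y X + gg \<rho> Z X"
  by (metis gg_sym gg_add2)
lemma gg_diff2: "gg \<rho> X (Y - Z) = gg \<rho> X Y - gg \<rho> X Z"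
  by (simp add: gg_def matrix_diff_ldistrib mtr_diff)
lemma gg_diff1: "gg \<rho> (Y - Z) X = gg \<rho> Y X - gg \<rho> Z X"
  by (metis gg_sym gg_diff2)
lemma gg_cscale2: "gg \<rho> X (cscale c Y) = c * gg \<rho> X Y"
  by (simp add: gg_def cscale_mult_right[symmetric] mtr_cscale)
lemma gg_cscale1: "gg \<rho> (cscale c Y) X = c * gg \<rho> Y X"
  by (metis gg_sym gg_cscale2)
lemma gg_zero2[simp]: "gg \<rho> X 0 = 0" by (simp add: gg_def mtr_def)
lemma gg_zero1[simp]: "gg \<rho> 0 X = 0" by (metis gg_sym gg_zero2)

lemma mtr_herm_prod:
  assumes "hermitian A" "hermitian B"
  shows "cnj (mtr (A ** B)) = mtr (A ** B)"
  using assms by (simp add: mtr_cadj[symmetric] cadj_mult hermitian_def mtr_comm)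

lemma gg_real:
  assumes "hermitian \<rho>" "hermitian X" "hermitian Y"
  shows "cnj (gg \<rho> X Y) = gg \<rho> X Y"
proof -
  have "hermitian (jp \<rho> X)" using assms
    by (simp add: hermitian_def jp_def Phi_def cadj_add cadj_cscale cadj_mult add.commute)
  then show ?thesis unfolding gg_def using mtr_herm_prod assms by blast
qed

lemma gg_pos:
  assumes "strictly_pos \<rho>" "hermitian X" "X \<noteq> 0"
  shows "0 < Re (gg \<rho> X X)"
proof -
  have "mtr (\<rho> ** (X ** X)) = mtr (X ** (\<rho> ** X))"
    using mtr_comm[of \<rho> "X ** X"] mtr_comm[of X "\<rho> ** X"] by (simp add: matrix_mul_assoc)
  then have "gg \<rho> X X = mtr (cadj X ** (\<rho> ** X))" using assms(2)
    by (simp add: gg_expand hermitian_def)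
  then show ?thesis using spd_tr_pos assms strictly_pos_def by metis
qed

lemma jp_D:
  assumes sp: "strictly_pos \<rho>"
  shows "jp \<rho> (comm_op \<rho> Y) = cscale (\<i>/2) (Y ** \<rho> - \<rho> ** Y)"
  using comm_op_eq[OF sp, of Y]
  by (simp add: jp_def Phi_def cscale_add[symmetric] add.commute cscale_cscale)

lemma gg_D:
  assumes sp: "strictly_pos \<rho>"
  shows "gg \<rho> X (comm_op \<rho> Y) = (\<i>/2) * (mtr (\<rho> ** (X ** Y)) - mtr (\<rho> ** (Y ** X)))"
proof -
  have a: "mtr (Y ** \<rho> ** X) = mtr (\<rho> ** (X ** Y))"
    using mtr_comm[of Y "\<rho> ** X"] by (simp add: matrix_mul_assoc)
  have "gg \<rho> X (comm_op \<rho> Y) = gg \<rho> (comm_op \<rho> Y) X" by (rule gg_sym)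
  also have "\<dots> = (\<i>/2) * (mtr (Y ** \<rho> ** X) - mtr (\<rho> ** Y ** X))"
    by (simp add: gg_def jp_D[OF sp] cscale_mult_left[symmetric] mtr_cscale matrix_diff_rdistrib mtr_diff)
  finally show ?thesis using a by (simp add: matrix_mul_assoc)
qed

lemma gg_D_antisym:
  assumes sp: "strictly_pos \<rho>"
  shows "gg \<rho> X (comm_op \<rho> Y) = - gg \<rho> Y (comm_op \<rho> X)"
  by (simp add: gg_D[OF sp] algebra_simps)

lemma gg_D_self:
  assumes sp: "strictly_pos \<rho>"
  shows "gg \<rho> X (comm_op \<rho> X) = 0"
  by (simp add: gg_D[OF sp])

lemma tr_rho_gg:
  assumes sp: "strictly_pos \<rho>"
  shows "mtr (\<rho> ** (X ** Y)) = gg \<rho> X Y - \<i> * gg \<rho> X (comm_op \<rho> Y)"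
  unfolding gg_D[OF sp] unfolding gg_expand by (simp add: field_simps)



lemma mm2: "((A::'a::comm_ring_1^2^2) ** B)$i$j = A$i$1 * B$1$j + A$i$2 * B$2$j"
  by (simp add: matrix_matrix_mult_def sum_2)

lemma meq2: "(A::'a^2^2) = B \<longleftrightarrow> A$1$1 = B$1$1 \<and> A$1$2 = B$1$2 \<and> A$2$1 = B$2$1 \<and> A$2$2 = B$2$2"
  by (auto simp: vec_eq_iff forall_2)

lemma quad2: "(x::real^2) \<bullet> (S *v x) = x$1*x$1*S$1$1 + x$1*x$2*(S$1$2+S$2$1) + x$2*x$2*S$2$2"
  by (simp add: inner_vec_def sum_2 matrix_vector_mult_def algebra_simps)

lemma quad_nonneg2:
  fixes a b c :: real
  assumes "0 \<le> a" "0 \<le> c" "b*b \<le> a*c"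
  shows "0 \<le> a*p*p + 2*b*p*q + c*q*q"
proof (cases "a = 0")
  case True
  then have "b = 0" using assms by (smt (verit) mult_eq_0_iff mult_le_0_iff zero_le_square)
  then show ?thesis using True assms by (metis add_0 mult.assoc mult_nonneg_nonneg mult_zero_left mult_zero_right zero_le_square)
next
  case False
  then have a: "a > 0" using assms by simp
  have "a * (a*p*p + 2*b*p*q + c*q*q) = (a*p + b*q)^2 + (a*c - b*b)*q*q"
    by (simp add: power2_eq_square algebra_simps)
  also have "\<dots> \<ge> 0"
  proof -
    have "0 \<le> (a*c - b*b) * (q*q)" using assms by simp
    then show ?thesis by (simp add: mult.assoc)
  qed
  finally show ?thesis using a by (simp add: zero_le_mult_iff)
qed

lemma psd2_props:
  assumes "real_psd (S::real^2^2)"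
  shows "S$1$2 = S$2$1" "0 \<le> S$1$1" "0 \<le> S$2$2" "S$1$2 * S$1$2 \<le> S$1$1 * S$2$2"
proof -
  have sym: "transpose S = S" and q: "\<And>x. 0 \<le> x \<bullet> (S *v x)" using assms real_psd_def by auto
  show s: "S$1$2 = S$2$1" using arg_cong[OF sym, of "\<lambda>M. M$1$2"] by (simp add: transpose_def)
  have q2: "0 \<le> u*u*S$1$1 + 2*u*w*S$1$2 + w*w*S$2$2" for u w
    using q[of "vector [u, w]"] unfolding quad2 by (simp add: s algebra_simps)
  show a: "0 \<le> S$1$1" using q2[of 1 0] by simp
  show c: "0 \<le> S$2$2" using q2[of 0 1] by simp
  show "S$1$2 * S$1$2 \<le> S$1$1 * S$2$2"
  proof (cases "S$2$2 = 0")
    case True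
    have "S$1$2 = 0"
    proof (rule ccontr)
      assume ne: "S$1$2 \<noteq> 0"
      have "0 \<le> (-S$1$2)*(-S$1$2)*S$1$1 + 2*(-S$1$2)*(S$1$1+1)*S$1$2" using q2[of "-S$1$2" "S$1$1+1"] True by simp
      moreover have "(-S$1$2)*(-S$1$2)*S$1$1 + 2*(-S$1$2)*(S$1$1+1)*S$1$2 = - ((S$1$2 * S$1$2) * (S$1$1 + 2))"
        by (simp add: algebra_simps)
      moreover have "(S$1$2 * S$1$2) * (S$1$1 + 2) > 0"
      proof -
        have "S$1$2 * S$1$2 > 0" using ne by (metis not_real_square_gt_zero)
        then show ?thesis using a by (simp add: mult_pos_pos)
      qed
      ultimately show False by linarith
    qed
    then show ?thesis using True by simp
  next
    case False
    then have c': "S$2$2 > 0" using c by simp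
    have "0 \<le> S$2$2*S$2$2*S$1$1 + 2*S$2$2*(-S$1$2)*S$1$2 + (-S$1$2)*(-S$1$2)*S$2$2"
      using q2[of "S$2$2" "-S$1$2"] .
    also have "\<dots> = S$2$2 * (S$1$1 * S$2$2 - S$1$2 * S$1$2)" by (simp add: algebra_simps)
    finally show ?thesis using c' by (simp add: zero_le_mult_iff)
  qed
qed

definition sq2 :: "real^2^2 \<Rightarrow> real^2^2" where
  "sq2 A = (let d = sqrt (A$1$1*A$2$2 - A$1$2*A$2$1); t = sqrt (A$1$1 + A$2$2 + 2*d) in
     if t = 0 then 0 else (\<chi> i j. (A$i$j + (if i = j then d else 0)) / t))"

lemma sq2_unique:
  assumes psd: "real_psd (S::real^2^2)" and SA: "S ** S = A"
  shows "S = sq2 A"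
proof -
  note p = psd2_props[OF psd]
  define x y z where "x = S$1$1" and "y = S$1$2" and "z = S$2$2"
  have S21: "S$2$1 = y" using p(1) y_def by simp
  have A11: "A$1$1 = x*x + y*y" using SA[symmetric] by (simp add: mm2 x_def y_def S21)
  have A12: "A$1$2 = y*(x+z)" using SA[symmetric] by (simp add: mm2 x_def y_def z_def S21 algebra_simps)
  have A21: "A$2$1 = y*(x+z)" using SA[symmetric] by (simp add: mm2 x_def y_def z_def S21 algebra_simps)
  have A22: "A$2$2 = y*y + z*z" using SA[symmetric] by (simp add: mm2 y_def z_def S21)
  have x0: "0 \<le> x" and z0: "0 \<le> z" and d0: "0 \<le> x*z - y*y" using p x_def y_def z_def by auto
  have det: "A$1$1*A$2$2 - A$1$2*A$2$1 = (x*z - y*y)^2"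
    unfolding A11 A12 A21 A22 by (simp add: power2_eq_square algebra_simps)
  have sd: "sqrt (A$1$1*A$2$2 - A$1$2*A$2$1) = x*z - y*y" unfolding det using d0 by simp
  have tt: "A$1$1 + A$2$2 + 2*(x*z - y*y) = (x+z)^2"
    unfolding A11 A22 by (simp add: power2_eq_square algebra_simps)
  have st: "sqrt (A$1$1 + A$2$2 + 2*(x*z - y*y)) = x + z" unfolding tt using x0 z0 by simp
  show ?thesis
  proof (cases "x + z = 0")
    case True
    then have "x = 0" "z = 0" using x0 z0 by auto
    then have "y = 0" using d0 by (smt (verit) mult_eq_0_iff zero_le_square mult_zero_left)
    then have "S = 0" using \<open>x = 0\<close> \<open>z = 0\<close> S21 by (simp add: meq2 x_def y_def z_def)
    then show ?thesis using True unfolding sq2_def Let_def sd st by simp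
  next
    case False
    then have pos: "x + z > 0" using x0 z0 by simp
    show ?thesis unfolding sq2_def Let_def sd st using False
      apply (simp add: meq2 A11 A12 A21 A22)
      apply (simp add: x_def[symmetric] y_def[symmetric] z_def[symmetric] S21)
      using pos by (simp add: field_simps power2_eq_square)
  qed
qed

lemma sq2_exists:
  fixes A :: "real^2^2"
  assumes s: "A$1$2 = A$2$1" and a: "0 \<le> A$1$1" and c: "0 \<le> A$2$2" and det: "A$1$2 * A$1$2 \<le> A$1$1 * A$2$2"
  shows "real_psd (sq2 A) \<and> sq2 A ** sq2 A = A"
proof -
  define d where "d = sqrt (A$1$1*A$2$2 - A$1$2*A$2$1)"
  define t where "t = sqrt (A$1$1 + A$2$2 + 2*d)"
  have d0: "0 \<le> d" using det s by (simp add: d_def)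
  have dd: "d*d = A$1$1*A$2$2 - A$1$2*A$2$1" using det s unfolding d_def by simp
  have t0: "0 \<le> t" using a c d0 by (simp add: t_def)
  have tt: "t*t = A$1$1 + A$2$2 + 2*d" using a c d0 unfolding t_def by simp
  show ?thesis
  proof (cases "t = 0")
    case True
    then have "A$1$1 = 0" "A$2$2 = 0" "d = 0" using tt a c d0 by auto
    then have "A$1$2 * A$1$2 \<le> 0" using det by simp
    then have "A$1$2 * A$1$2 = 0" using zero_le_square[of "A$1$2"] by linarith
    then have "A$1$2 = 0" by simp
    then have "A = 0" using \<open>A$1$1 = 0\<close> \<open>A$2$2 = 0\<close> s by (simp add: meq2)
    moreover have "sq2 A = 0" using True unfolding sq2_def Let_def d_def[symmetric] t_def[symmetric] by simp
    moreover have "transpose (0::real^2^2) = 0" by (simp add: transpose_def vec_eq_iff)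
    ultimately show ?thesis by (simp add: real_psd_def)
  next
    case False
    then have tp: "t > 0" using t0 by simp
    have S: "sq2 A = (\<chi> i j. (A$i$j + (if i = j then d else 0)) / t)"
      using False unfolding sq2_def Let_def d_def[symmetric] t_def[symmetric] by simp
    have psd: "real_psd (sq2 A)"
      unfolding real_psd_def
    proof
      show "transpose (sq2 A) = sq2 A" unfolding S by (simp add: meq2 transpose_def s)
      show "\<forall>x. 0 \<le> x \<bullet> (sq2 A *v x)"
      proof
        fix x :: "real^2"
        have "x \<bullet> (sq2 A *v x) = ((A$1$1*(x$1)*(x$1) + 2*A$1$2*(x$1)*(x$2) + A$2$2*(x$2)*(x$2)) + d*((x$1)*(x$1) + (x$2)*(x$2))) / t"
          unfolding quad2 S using tp by (simp add: s field_simps)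
        moreover have "0 \<le> A$1$1*(x$1)*(x$1) + 2*A$1$2*(x$1)*(x$2) + A$2$2*(x$2)*(x$2)"
          by (rule quad_nonneg2[OF a c det])
        ultimately show "0 \<le> x \<bullet> (sq2 A *v x)" using d0 tp by simp
      qed
    qed
    have "sq2 A ** sq2 A = A"
    proof -
      have tX: "t*(t*X) = (A$1$1 + A$2$2 + 2*d)*X" for X by (simp add: mult.assoc[symmetric] tt)
      have dX: "d*(d*X) = (A$1$1*A$2$2 - A$1$2*A$2$1)*X" for X by (simp add: mult.assoc[symmetric] dd)
      show ?thesis unfolding S meq2 using tp apply (simp add: mm2 field_simps)
        apply (simp add: tX dX s algebra_simps)
        using dd s by simp
    qed
    then show ?thesis using psd by simp
  qed
qed

lemma psd_sqrt_det:
  assumes psd: "real_psd (S::real^2^2)" and SA: "S ** S = A"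
  shows "S$1$1*S$2$2 - S$1$2*S$2$1 = sqrt (A$1$1*A$2$2 - A$1$2*A$2$1)"
proof -
  note p = psd2_props[OF psd]
  define x y z where "x = S$1$1" and "y = S$1$2" and "z = S$2$2"
  have S21: "S$2$1 = y" using p(1) y_def by simp
  have A11: "A$1$1 = x*x + y*y" using SA[symmetric] by (simp add: mm2 x_def y_def S21)
  have A12: "A$1$2 = y*(x+z)" using SA[symmetric] by (simp add: mm2 x_def y_def z_def S21 algebra_simps)
  have A21: "A$2$1 = y*(x+z)" using SA[symmetric] by (simp add: mm2 x_def y_def z_def S21 algebra_simps)
  have A22: "A$2$2 = y*y + z*z" using SA[symmetric] by (simp add: mm2 y_def z_def S21)
  have d0: "0 \<le> x*z - y*y" using p x_def y_def z_def by auto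
  have det: "A$1$1*A$2$2 - A$1$2*A$2$1 = (x*z - y*y)^2"
    unfolding A11 A12 A21 A22 by (simp add: power2_eq_square algebra_simps)
  show ?thesis unfolding det using d0 by (simp add: x_def[symmetric] y_def[symmetric] z_def[symmetric] S21)
qed

lemma msqrt_eq:
  fixes A :: "real^2^2"
  assumes "A$1$2 = A$2$1" "0 \<le> A$1$1" "0 \<le> A$2$2" "A$1$2 * A$1$2 \<le> A$1$1 * A$2$2"
  shows "msqrt A = sq2 A"
  unfolding msqrt_def
  by (rule the_equality) (use sq2_exists[OF assms] sq2_unique in auto)

lemma mtr2: "mtr (A::real^2^2) = A$1$1 + A$2$2" by (simp add: mtr_def sum_2)

lemma posdef_props:
  assumes "real_pos_def (G::real^2^2)"
  shows "G$1$2 = G$2$1" "0 < G$1$1" "0 < G$2$2" "0 < G$1$1*G$2$2 - G$1$2*G$2$1"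
proof -
  have sym: "transpose G = G" and q: "\<And>x. x \<noteq> 0 \<Longrightarrow> 0 < x \<bullet> (G *v x)" using assms real_pos_def_def by auto
  show s: "G$1$2 = G$2$1" using arg_cong[OF sym, of "\<lambda>M. M$1$2"] by (simp add: transpose_def)
  have nz: "vector [u, w] \<noteq> (0::real^2)" if "u \<noteq> 0 \<or> w \<noteq> 0" for u w
    using that by (metis vector_2 zero_index)
  have q2: "0 < u*u*G$1$1 + 2*u*w*G$1$2 + w*w*G$2$2" if "u \<noteq> 0 \<or> w \<noteq> 0" for u w
    using q[OF nz[OF that]] unfolding quad2 by (simp add: s algebra_simps)
  show a: "0 < G$1$1" using q2[of 1 0] by simp
  show c: "0 < G$2$2" using q2[of 0 1] by simp
  have "0 < G$2$2*G$2$2*G$1$1 + 2*G$2$2*(-G$1$2)*G$1$2 + (-G$1$2)*(-G$1$2)*G$2$2"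
    using q2[of "G$2$2" "-G$1$2"] c by simp
  also have "\<dots> = G$2$2 * (G$1$1 * G$2$2 - G$1$2 * G$2$1)" by (simp add: s algebra_simps)
  finally show "0 < G$1$1*G$2$2 - G$1$2*G$2$1" using c by (simp add: zero_less_mult_iff)
qed

lemma msqrt_G:
  assumes "real_pos_def (G::real^2^2)"
  shows "real_psd (msqrt G)" "msqrt G ** msqrt G = G"
    "(msqrt G)$1$1*(msqrt G)$2$2 - (msqrt G)$1$2*(msqrt G)$2$1 = sqrt (G$1$1*G$2$2 - G$1$2*G$2$1)"
proof -
  note p = posdef_props[OF assms]
  have c: "G$1$2 * G$1$2 \<le> G$1$1 * G$2$2" using p by simp
  have m: "msqrt G = sq2 G" by (rule msqrt_eq) (use p c in auto)
  show a: "real_psd (msqrt G)" "msqrt G ** msqrt G = G" unfolding m using sq2_exists[of G] p c by auto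
  show "(msqrt G)$1$1*(msqrt G)$2$2 - (msqrt G)$1$2*(msqrt G)$2$1 = sqrt (G$1$1*G$2$2 - G$1$2*G$2$1)"
    by (rule psd_sqrt_det[OF a])
qed

lemma tabs:
  fixes G M :: "real^2^2"
  assumes G: "real_pos_def G" and M: "M$1$1 = 0" "M$2$2 = 0" "M$2$1 = - M$1$2"
  shows "mtr (mabs (msqrt G ** M ** msqrt G)) = 2 * sqrt (G$1$1*G$2$2 - G$1$2*G$2$1) * \<bar>M$1$2\<bar>"
proof -
  define S where "S = msqrt G"
  note sG = msqrt_G[OF G, folded S_def]
  note p = psd2_props[OF sG(1)]
  define \<delta> where "\<delta> = sqrt (G$1$1*G$2$2 - G$1$2*G$2$1)"
  have d0: "0 \<le> \<delta>" using posdef_props[OF G] by (simp add: \<delta>_def)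
  define m where "m = M$1$2"
  define X where "X = S ** M ** S"
  have e: "S$1$1 * (w * S$2$2) = w*\<delta> + w*(S$2$1*S$2$1)" for w
  proof -
    have "S$1$1 * S$2$2 = \<delta> + S$2$1*S$2$1" using sG(3) p(1) unfolding \<delta>_def[symmetric] by simp
    then show ?thesis by (metis distrib_left mult.left_commute)
  qed
  have X: "X$1$1 = 0" "X$1$2 = m*\<delta>" "X$2$1 = -(m*\<delta>)" "X$2$2 = 0"
    using p(1) M unfolding X_def m_def by (simp_all add: mm2 algebra_simps e)
  define P where "P = transpose X ** X"
  have P: "P$1$1 = (m*\<delta>)*(m*\<delta>)" "P$1$2 = 0" "P$2$1 = 0" "P$2$2 = (m*\<delta>)*(m*\<delta>)"
    unfolding P_def by (simp_all add: mm2 transpose_def X)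
  have mP: "mabs X = sq2 P" unfolding mabs_def P_def[symmetric] by (rule msqrt_eq) (simp_all add: P)
  have "mtr (sq2 P) = 2 * \<delta> * \<bar>m\<bar>"
  proof (cases "m*\<delta> = 0")
    case True
    then have "sq2 P = 0" unfolding sq2_def Let_def using True by (auto simp: P)
    then show ?thesis using True d0 by (auto simp: mtr2)
  next
    case False
    have s1: "sqrt (P$1$1*P$2$2 - P$1$2*P$2$1) = (m*\<delta>)*(m*\<delta>)" by (simp add: P)
    have s2: "sqrt (P$1$1 + P$2$2 + 2*((m*\<delta>)*(m*\<delta>))) = 2*\<bar>m*\<delta>\<bar>"
    proof -
      have h: "P$1$1 + P$2$2 + 2*((m*\<delta>)*(m*\<delta>)) = (2*\<bar>m*\<delta>\<bar>)^2" by (simp add: P power2_eq_square algebra_simps)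
      show ?thesis unfolding h real_sqrt_abs by simp
    qed
    show ?thesis unfolding sq2_def Let_def s1 s2 using False d0
      by (simp add: mtr2 P abs_mult field_simps)
  qed
  then show ?thesis unfolding S_def[symmetric] X_def[symmetric] mP m_def \<delta>_def .
qed



lemma psd_c2:
  fixes P11 P12 P21 P22 :: complex
  assumes i1: "Im P11 = 0" and i2: "Im P22 = 0" and h: "P21 = cnj P12"
    and q: "\<And>a b. 0 \<le> Re (cnj a * P11 * a + cnj a * P12 * b + cnj b * P21 * a + cnj b * P22 * b)"
  shows "0 \<le> Re P11" "0 \<le> Re P22" "(Re P12)^2 + (Im P12)^2 \<le> Re P11 * Re P22"
proof -
  have qr: "0 \<le> Re (cnj a * P11 * a + cnj a * P12 * b + cnj b * cnj P12 * a + cnj b * P22 * b)" for a b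
    using q[of a b] h by simp
  show p: "0 \<le> Re P11" using qr[of 1 0] by simp
  show r: "0 \<le> Re P22" using qr[of 0 1] by simp
  define n where "n = (Re P12)^2 + (Im P12)^2"
  have n0: "0 \<le> n" by (simp add: n_def)
  have "n * Re P22 \<le> Re P11 * Re P22 * Re P22"
  proof -
    have "0 \<le> Re (cnj (complex_of_real (Re P22)) * P11 * complex_of_real (Re P22) + cnj (complex_of_real (Re P22)) * P12 * (- cnj P12)
        + cnj (- cnj P12) * cnj P12 * complex_of_real (Re P22) + cnj (- cnj P12) * P22 * (- cnj P12))"
      by (rule qr)
    also have "\<dots> = Re P22 * (Re P11 * Re P22 - n)"
      using i1 i2 by (simp add: n_def power2_eq_square algebra_simps)
    finally show ?thesis by (simp add: algebra_simps)
  qed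
  show "(Re P12)^2 + (Im P12)^2 \<le> Re P11 * Re P22"
  proof (cases "Re P22 = 0")
    case False
    then have "Re P22 > 0" using r by simp
    then show ?thesis using \<open>n * Re P22 \<le> Re P11 * Re P22 * Re P22\<close> unfolding n_def[symmetric] by simp
  next
    case True
    have "0 \<le> Re (cnj (complex_of_real n) * P11 * complex_of_real n + cnj (complex_of_real n) * P12 * (- complex_of_real (Re P11 + 1) * cnj P12)
        + cnj (- complex_of_real (Re P11 + 1) * cnj P12) * cnj P12 * complex_of_real n
        + cnj (- complex_of_real (Re P11 + 1) * cnj P12) * P22 * (- complex_of_real (Re P11 + 1) * cnj P12))"
      by (rule qr)
    also have "\<dots> = - (n * n * (Re P11 + 2))"
      using i1 i2 True by (simp add: n_def power2_eq_square algebra_simps)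
    finally have "n * n * (Re P11 + 2) \<le> 0" by simp
    then have "n = 0" using p n0 by (smt (verit) mult_nonneg_nonneg mult_pos_pos)
    then show ?thesis using True n_def by simp
  qed
qed

lemma trG_ineq:
  fixes G :: "real^2^2" and p r re im :: real
  assumes G: "real_pos_def G" and p: "0 \<le> p" and r: "0 \<le> r" and d: "re^2 + im^2 \<le> p * r"
  shows "2 * sqrt (G$1$1*G$2$2 - G$1$2*G$2$1) * \<bar>im\<bar> \<le> G$1$1 * p + 2 * G$1$2 * re + G$2$2 * r"
proof -
  note g = posdef_props[OF G]
  define a b c where "a = G$1$1" and "b = G$1$2" and "c = G$2$2"
  define D where "D = a*c - b*b"
  have Dd: "G$1$1*G$2$2 - G$1$2*G$2$1 = D" using g(1) by (simp add: D_def a_def b_def c_def)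
  have a0: "a > 0" and D0: "D > 0" using g Dd by (auto simp: a_def)
  define L where "L = a * p + 2 * b * re + c * r"
  define u where "u = a*a*p + 2*a*b*re + b*b*r"
  have aL: "a * L = u + D * r" by (simp add: L_def u_def D_def algebra_simps)
  have u0: "0 \<le> u"
  proof -
    have "re*re \<le> p*r" using d by (smt (verit) power2_eq_square zero_le_power2)
    then have "0 \<le> p*a*a + 2*re*a*b + r*b*b" by (rule quad_nonneg2[OF p r])
    then show ?thesis by (simp add: u_def algebra_simps)
  qed
  have L0: "0 \<le> L" using aL u0 D0 r a0 by (smt (verit) mult_nonneg_nonneg zero_le_mult_iff)
  have ur: "a*a*(p*r - re*re) \<le> u * r"
  proof -
    have "u * r - a*a*(p*r - re*re) = (a*re + b*r)^2" by (simp add: u_def power2_eq_square algebra_simps)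
    then show ?thesis by (smt (verit) zero_le_power2)
  qed
  have amgm: "4 * u * (D * r) \<le> (u + D*r)^2"
  proof -
    have "(u + D*r)^2 - 4 * u * (D * r) = (u - D*r)^2" by (simp add: power2_eq_square algebra_simps)
    then show ?thesis by (smt (verit) zero_le_power2)
  qed
  have "a*a*(4 * D * im^2) \<le> a*a*(4 * D * (p*r - re*re))"
    using d D0 by (simp add: power2_eq_square mult_left_mono)
  also have "\<dots> = 4 * D * (a*a*(p*r - re*re))" by simp
  also have "\<dots> \<le> 4 * D * (u * r)" using ur D0 by simp
  also have "\<dots> \<le> (a * L)^2" using amgm unfolding aL by (simp add: algebra_simps)
  finally have "a*a*(4 * D * im^2) \<le> a*a*L^2" by (simp add: power2_eq_square algebra_simps)
  then have "4 * D * im^2 \<le> L^2" using a0 by (simp add: mult_le_cancel_left)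
  then have "sqrt (4 * D * im^2) \<le> sqrt (L^2)" by (rule real_sqrt_le_mono)
  moreover have "sqrt (4 * D * im^2) = 2 * sqrt D * \<bar>im\<bar>" by (simp add: real_sqrt_mult)
  ultimately show ?thesis using L0 unfolding Dd L_def a_def b_def c_def by simp
qed



lemma Phi_add: "Phi \<rho> a b (X + Y) = Phi \<rho> a b X + Phi \<rho> a b Y"
  using linear_add[OF Phi_linear] by blast
lemma Phi_cscale: "Phi \<rho> a b (cscale c X) = cscale c (Phi \<rho> a b X)"
  unfolding Phi_def
  by (simp only: cscale_mult_left[symmetric] cscale_mult_right[symmetric] cscale_cscale mult.commute[of c] cscale_add)
lemma jp_add: "jp \<rho> (X + Y) = jp \<rho> X + jp \<rho> Y" by (simp add: jp_def Phi_add)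
lemma jp_cscale: "jp \<rho> (cscale c X) = cscale c (jp \<rho> X)" by (simp add: jp_def Phi_cscale)

locale setting =
  fixes \<rho> :: "complex^'n^'n" and dR :: "2 \<Rightarrow> complex^'n^'n" and T :: "(complex^'n^'n) set"
  assumes sp: "strictly_pos \<rho>"
    and indep: "\<forall>a b::real. a *\<^sub>R logder 0 \<rho> (dR 1) + b *\<^sub>R logder 0 \<rho> (dR 2) = 0 \<longrightarrow> a = 0 \<and> b = 0"
    and subT: "subspace T" and dimT: "dim T = 3" and hermT: "\<forall>X\<in>T. hermitian X"
    and spanT: "span {logder 0 \<rho> (dR 1), logder 0 \<rho> (dR 2)} \<subseteq> T"
    and DT: "comm_op \<rho> ` T \<subseteq> T"
begin

abbreviation "e1 \<equiv> logder 0 \<rho> (dR 1)"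
abbreviation "e2 \<equiv> logder 0 \<rho> (dR 2)"
abbreviation "D \<equiv> comm_op \<rho>"
abbreviation "g \<equiv> gg \<rho>"

lemma herm_rho: "hermitian \<rho>" using sp strictly_pos_def by blast

lemma e1T: "e1 \<in> T" using spanT span_base[of e1 "{e1,e2}"] by auto
lemma e2T: "e2 \<in> T" using spanT span_base[of e2 "{e1,e2}"] by auto

lemma dR_jp: "dR k = jp \<rho> (logder 0 \<rho> (dR k))"
  using logder0_eq[OF sp] by simp

lemma DT': "X \<in> T \<Longrightarrow> D X \<in> T" using DT by auto

lemma g_real: "X \<in> T \<Longrightarrow> Y \<in> T \<Longrightarrow> g X Y = complex_of_real (Re (g X Y))"
  using gg_real[OF herm_rho, of X Y] hermT by (metis complex_is_Real_iff Reals_cnj_iff of_real_Re)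

lemma scaleR_T: "X \<in> T \<Longrightarrow> c *\<^sub>R X \<in> T" using subT by (simp add: subspace_scale)

definition SS :: "real^2^2" where
  "SS = (\<chi> k l. Re (g (logder 0 \<rho> (dR k)) (logder 0 \<rho> (dR l))))"

lemma eT: "logder 0 \<rho> (dR k) \<in> T"
  using e1T e2T exhaust_2[of k] by auto

lemma SS_pd: "real_pos_def SS"
  unfolding real_pos_def_def
proof
  show "transpose SS = SS" by (simp add: SS_def transpose_def vec_eq_iff gg_sym)
  show "\<forall>x. x \<noteq> 0 \<longrightarrow> 0 < x \<bullet> (SS *v x)"
  proof (intro allI impI)
    fix x :: "real^2" assume x: "x \<noteq> 0"
    define X where "X = (x$1) *\<^sub>R e1 + (x$2) *\<^sub>R e2"
    have XT: "X \<in> T" unfolding X_def using e1T e2T subT by (simp add: subspace_add scaleR_T)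
    have X0: "X \<noteq> 0"
    proof
      assume "X = 0"
      then have "x$1 = 0 \<and> x$2 = 0" using indep[rule_format, of "x$1" "x$2"] X_def by simp
      then show False using x by (metis exhaust_2 vec_eq_iff zero_index)
    qed
    have "g X X = complex_of_real (x \<bullet> (SS *v x))"
    proof -
      have "g X X = complex_of_real (x$1) * complex_of_real (x$1) * g e1 e1 + complex_of_real (x$1) * complex_of_real (x$2) * g e1 e2
         + complex_of_real (x$2) * complex_of_real (x$1) * g e2 e1 + complex_of_real (x$2) * complex_of_real (x$2) * g e2 e2"
        unfolding X_def scaleR_cscale by (simp add: gg_add1 gg_add2 gg_cscale1 gg_cscale2 algebra_simps)
      also have "\<dots> = complex_of_real (x \<bullet> (SS *v x))"
        apply (subst g_real[OF e1T e1T]) apply (subst g_real[OF e1T e2T])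
        apply (subst g_real[OF e2T e1T]) apply (subst g_real[OF e2T e2T])
        by (simp add: inner_vec_def sum_2 matrix_vector_mult_def SS_def algebra_simps)
      finally show ?thesis .
    qed
    then show "0 < x \<bullet> (SS *v x)" using gg_pos[OF sp _ X0] hermT XT by (metis Re_complex_of_real)
  qed
qed

definition "s11 = SS$1$1"
definition "s12 = SS$1$2"
definition "s22 = SS$2$2"
definition "\<delta> = s11 * s22 - s12 * s12"

lemma SS_facts: "0 < s11" "0 < s22" "0 < \<delta>" "SS$2$1 = s12"
  using posdef_props[OF SS_pd] unfolding s11_def s12_def s22_def \<delta>_def by auto

lemma g_e11: "g e1 e1 = complex_of_real s11" using g_real[OF e1T e1T] by (simp add: s11_def SS_def)
lemma g_e12: "g e1 e2 = complex_of_real s12" using g_real[OF e1T e2T] by (simp add: s12_def SS_def)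
lemma g_e21: "g e2 e1 = complex_of_real s12" using g_e12 gg_sym by metis
lemma g_e22: "g e2 e2 = complex_of_real s22" using g_real[OF e2T e2T] by (simp add: s22_def SS_def)

lemma e_in_span: "X \<in> span {e1, e2} \<Longrightarrow> \<exists>a b. X = a *\<^sub>R e1 + b *\<^sub>R e2"
  by (auto simp: span_insert span_singleton) (metis add.commute diff_add_cancel)

lemma exists_h: "\<exists>h\<in>T. h \<notin> span {e1, e2}"
proof (rule ccontr)
  assume "\<not> ?thesis"
  then have "T \<subseteq> span {e1, e2}" by auto
  then have "dim T \<le> card {e1, e2}" by (rule dim_le_card) simp
  also have "\<dots> \<le> 2" by (simp add: card_insert_if)
  finally show False using dimT by simp
qed


definition "hh = (SOME h. h \<in> T \<and> h \<notin> span {e1, e2})"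
lemma hh: "hh \<in> T" "hh \<notin> span {e1, e2}"
  using someI_ex[OF exists_h[unfolded Bex_def]] unfolding hh_def by auto

definition "ha = (s22 * Re (g e1 hh) - s12 * Re (g e2 hh)) / \<delta>"
definition "hb = (s11 * Re (g e2 hh) - s12 * Re (g e1 hh)) / \<delta>"
definition "f = hh - ha *\<^sub>R e1 - hb *\<^sub>R e2"

lemma fT: "f \<in> T" unfolding f_def using hh(1) e1T e2T subT by (simp add: subspace_diff scaleR_T)
lemma f_span: "f \<notin> span {e1, e2}"
proof
  assume "f \<in> span {e1, e2}"
  then have "f + ha *\<^sub>R e1 + hb *\<^sub>R e2 \<in> span {e1, e2}"
    by (simp add: span_add span_scale span_base)
  then show False using hh(2) by (simp add: f_def)
qed
lemma f_ne0: "f \<noteq> 0" using f_span span_zero by metis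

lemma g_e1f: "g e1 f = 0"
proof -
  have "g e1 f = g e1 hh - complex_of_real ha * complex_of_real s11 - complex_of_real hb * complex_of_real s12"
    unfolding f_def scaleR_cscale by (simp add: gg_diff2 gg_cscale2 g_e11 g_e12)
  also have "g e1 hh = complex_of_real (Re (g e1 hh))" by (rule g_real[OF e1T hh(1)])
  finally have "g e1 f = complex_of_real (Re (g e1 hh) - ha * s11 - hb * s12)" by simp
  moreover have "Re (g e1 hh) - ha * s11 - hb * s12 = 0"
    using SS_facts(3) unfolding ha_def hb_def \<delta>_def by (simp add: field_simps)
  ultimately show ?thesis by simp
qed

lemma g_e2f: "g e2 f = 0"
proof -
  have "g e2 f = g e2 hh - complex_of_real ha * complex_of_real s12 - complex_of_real hb * complex_of_real s22"
    unfolding f_def scaleR_cscale by (simp add: gg_diff2 gg_cscale2 g_e21 g_e22)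
  also have "g e2 hh = complex_of_real (Re (g e2 hh))" by (rule g_real[OF e2T hh(1)])
  finally have "g e2 f = complex_of_real (Re (g e2 hh) - ha * s12 - hb * s22)" by simp
  moreover have "Re (g e2 hh) - ha * s12 - hb * s22 = 0"
    using SS_facts(3) unfolding ha_def hb_def \<delta>_def by (simp add: field_simps)
  ultimately show ?thesis by simp
qed

lemma g_fe1: "g f e1 = 0" using g_e1f gg_sym by metis
lemma g_fe2: "g f e2 = 0" using g_e2f gg_sym by metis

definition "ss = Re (g f f)"
lemma ss_pos: "0 < ss" using gg_pos[OF sp _ f_ne0] hermT fT by (simp add: ss_def)
lemma g_ff: "g f f = complex_of_real ss" using g_real[OF fT fT] by (simp add: ss_def)

lemma e12_ne: "e1 \<noteq> e2"
proof
  assume "e1 = e2"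
  then have "1 *\<^sub>R e1 + (-1) *\<^sub>R e2 = 0" by simp
  then show False using indep[rule_format, of 1 "-1"] by simp
qed

lemma indep3: "independent {f, e1, e2}"
proof -
  have e2n: "e2 \<noteq> 0"
  proof
    assume "e2 = 0" then have "0 *\<^sub>R e1 + 1 *\<^sub>R e2 = 0" by simp
    then show False using indep[rule_format, of 0 1] by simp
  qed
  have e1s: "e1 \<notin> span {e2}"
  proof
    assume "e1 \<in> span {e2}"
    then obtain c where "e1 = c *\<^sub>R e2" by (auto simp: span_singleton)
    then have "1 *\<^sub>R e1 + (-c) *\<^sub>R e2 = 0" by simp
    then show False using indep[rule_format, of 1 "-c"] by simp
  qed
  have i1: "independent {e2}"
    by (rule real_vector.independent_insertI) (use e2n in \<open>auto simp: real_vector.independent_empty\<close>)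
  have i2: "independent {e1, e2}"
    by (rule real_vector.independent_insertI[OF e1s i1])
  show ?thesis by (rule real_vector.independent_insertI[OF f_span i2])
qed

lemma T_span3: "T \<subseteq> span {f, e1, e2}"
proof (rule card_ge_dim_independent)
  show "{f, e1, e2} \<subseteq> T" using fT e1T e2T by auto
  show "independent {f, e1, e2}" by (rule indep3)
  have "f \<noteq> e1" using f_span span_base[of e1 "{e1,e2}"] by auto
  moreover have "f \<noteq> e2" using f_span span_base[of e2 "{e1,e2}"] by auto
  ultimately have "card {f, e1, e2} = 3" using e12_ne by simp
  then show "dim T \<le> card {f, e1, e2}" using dimT by simp
qed

lemma T_coords: "X \<in> T \<Longrightarrow> \<exists>a b c. X = a *\<^sub>R e1 + b *\<^sub>R e2 + c *\<^sub>R f"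
proof -
  assume "X \<in> T"
  then have "X \<in> span (insert f {e1, e2})" using T_span3 by auto
  then obtain k where "X - k *\<^sub>R f \<in> span {e1, e2}" by (auto simp: span_insert)
  then obtain a b where "X - k *\<^sub>R f = a *\<^sub>R e1 + b *\<^sub>R e2" using e_in_span by blast
  then have "X = a *\<^sub>R e1 + b *\<^sub>R e2 + k *\<^sub>R f" by (simp add: algebra_simps)
  then show ?thesis by blast
qed

definition inTC :: "complex^'n^'n \<Rightarrow> bool" where
  "inTC X \<longleftrightarrow> (\<exists>a b c. X = cscale a e1 + cscale b e2 + cscale c f)"

lemma inTC_T: "X \<in> T \<Longrightarrow> inTC X"
  unfolding inTC_def using T_coords by (metis scaleR_cscale)

lemma inTC_add: "inTC X \<Longrightarrow> inTC Y \<Longrightarrow> inTC (X + Y)"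
proof -
  assume "inTC X" "inTC Y"
  then obtain a b c a' b' c' where "X = cscale a e1 + cscale b e2 + cscale c f" "Y = cscale a' e1 + cscale b' e2 + cscale c' f"
    unfolding inTC_def by blast
  then have "X + Y = cscale (a + a') e1 + cscale (b + b') e2 + cscale (c + c') f"
    by (simp add: cscale_add_left algebra_simps)
  then show ?thesis unfolding inTC_def by blast
qed

lemma inTC_cscale: "inTC X \<Longrightarrow> inTC (cscale k X)"
proof -
  assume "inTC X"
  then obtain a b c where "X = cscale a e1 + cscale b e2 + cscale c f"
    unfolding inTC_def by blast
  then have "cscale k X = cscale (k*a) e1 + cscale (k*b) e2 + cscale (k*c) f"
    by (simp add: cscale_add cscale_cscale)
  then show ?thesis unfolding inTC_def by blast
qed

lemma inTC_diff: "inTC X \<Longrightarrow> inTC Y \<Longrightarrow> inTC (X - Y)"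
proof -
  assume "inTC X" "inTC Y"
  then have "inTC (X + cscale (-1) Y)" by (simp add: inTC_add inTC_cscale)
  moreover have "X + cscale (-1) Y = X - Y" by (simp add: cscale_neg)
  ultimately show ?thesis by simp
qed

lemma inTC_D: "inTC X \<Longrightarrow> inTC (D X)"
proof -
  assume "inTC X"
  then obtain a b c where X: "X = cscale a e1 + cscale b e2 + cscale c f"
    unfolding inTC_def by blast
  have "D X = cscale a (D e1) + cscale b (D e2) + cscale c (D f)"
    unfolding X by (simp add: comm_op_add[OF sp] comm_op_cscale[OF sp])
  moreover have "inTC (D e1)" "inTC (D e2)" "inTC (D f)" using DT' e1T e2T fT inTC_T by auto
  ultimately show ?thesis by (simp add: inTC_add inTC_cscale)
qed

lemma inTC_zero:
  assumes "inTC X" "g e1 X = 0" "g e2 X = 0" "g f X = 0"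
  shows "X = 0"
proof -
  obtain a b c where X: "X = cscale a e1 + cscale b e2 + cscale c f"
    using assms(1) unfolding inTC_def by blast
  have "g f X = c * complex_of_real ss" unfolding X by (simp add: gg_add2 gg_cscale2 g_fe1 g_fe2 g_ff)
  then have c: "c = 0" using assms(4) ss_pos by simp
  have 1: "a * complex_of_real s11 + b * complex_of_real s12 = 0"
    using assms(2) unfolding X c by (simp add: gg_add2 gg_cscale2 g_e11 g_e12)
  have 2: "a * complex_of_real s12 + b * complex_of_real s22 = 0"
    using assms(3) unfolding X c by (simp add: gg_add2 gg_cscale2 g_e21 g_e22)
  have "a * complex_of_real \<delta> = complex_of_real s22 * (a * complex_of_real s11 + b * complex_of_real s12) - complex_of_real s12 * (a * complex_of_real s12 + b * complex_of_real s22)"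
    by (simp add: \<delta>_def algebra_simps)
  then have a: "a = 0" using 1 2 SS_facts(3) by simp
  have "b * complex_of_real \<delta> = complex_of_real s11 * (a * complex_of_real s12 + b * complex_of_real s22) - complex_of_real s12 * (a * complex_of_real s11 + b * complex_of_real s12)"
    by (simp add: \<delta>_def algebra_simps)
  then have b: "b = 0" using 1 2 SS_facts(3) by simp
  show ?thesis unfolding X a b c by simp
qed

end



context setting begin

definition "pK = Re (g e1 (D e2))"
definition "qK = Re (g e1 (D f))"
definition "rK = Re (g e2 (D f))"

lemma gD_real: "X \<in> T \<Longrightarrow> Y \<in> T \<Longrightarrow> g X (D Y) = complex_of_real (Re (g X (D Y)))"
  using g_real DT' by blast

lemma gD_vals:
  "g e1 (D e1) = 0" "g e2 (D e2) = 0" "g f (D f) = 0"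
  "g e1 (D e2) = complex_of_real pK" "g e2 (D e1) = - complex_of_real pK"
  "g e1 (D f) = complex_of_real qK" "g f (D e1) = - complex_of_real qK"
  "g e2 (D f) = complex_of_real rK" "g f (D e2) = - complex_of_real rK"
  using gg_D_self[OF sp] gD_real e1T e2T fT gg_D_antisym[OF sp]
  unfolding pK_def qK_def rK_def by metis+

lemma g_lin3:
  "g e1 (cscale a e1 + cscale b e2 + cscale c f) = a * complex_of_real s11 + b * complex_of_real s12"
  "g e2 (cscale a e1 + cscale b e2 + cscale c f) = a * complex_of_real s12 + b * complex_of_real s22"
  "g f (cscale a e1 + cscale b e2 + cscale c f) = c * complex_of_real ss"
  by (simp_all add: gg_add2 gg_cscale2 g_e11 g_e12 g_e21 g_e22 g_e1f g_e2f g_fe1 g_fe2 g_ff)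

lemma D_lin3: "D (cscale a e1 + cscale b e2 + cscale c f) = cscale a (D e1) + cscale b (D e2) + cscale c (D f)"
  by (simp add: comm_op_add[OF sp] comm_op_cscale[OF sp])

lemma gD_lin3:
  "g e1 (D (cscale a e1 + cscale b e2 + cscale c f)) = b * complex_of_real pK + c * complex_of_real qK"
  "g e2 (D (cscale a e1 + cscale b e2 + cscale c f)) = - a * complex_of_real pK + c * complex_of_real rK"
  "g f (D (cscale a e1 + cscale b e2 + cscale c f)) = - a * complex_of_real qK - b * complex_of_real rK"
  unfolding D_lin3 by (simp_all add: gg_add2 gg_cscale2 gD_vals)

definition jsi :: "2 \<Rightarrow> 2 \<Rightarrow> real" where
  "jsi i j = (if i = 1 \<and> j = 1 then s22 else if i = 2 \<and> j = 2 then s11 else - s12) / \<delta>"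

definition uu :: "2 \<Rightarrow> real" where
  "uu i = (if i = 1 then (s22 * qK - s12 * rK) / \<delta> else (s11 * rK - s12 * qK) / \<delta>)"

definition AA :: "2 \<Rightarrow> 2 \<Rightarrow> real" where
  "AA i j = (if i = 1 \<and> j = 2 then 1 else if i = 2 \<and> j = 1 then -1 else 0)"

definition Cm :: "real \<Rightarrow> complex^2^2" where
  "Cm \<beta> = (\<chi> i j. Complex (jsi i j - \<beta>^2 / ss * uu i * uu j) (\<beta> * pK / \<delta> * AA i j))"

definition Ym :: "real \<Rightarrow> 2 \<Rightarrow> complex^'n^'n" where
  "Ym \<beta> m = cscale (complex_of_real (jsi 1 m)) e1 + cscale (complex_of_real (jsi 2 m)) e2
     + cscale (\<i> * complex_of_real (\<beta> * uu m / ss)) f"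

lemma two_ne: "(1::2) \<noteq> 2" by simp

lemma dpos: "0 < \<delta>" using SS_facts(3) .

lemma jsi_rel:
  "s11 * jsi 1 1 + s12 * jsi 2 1 = 1" "s11 * jsi 1 2 + s12 * jsi 2 2 = 0"
  "s12 * jsi 1 1 + s22 * jsi 2 1 = 0" "s12 * jsi 1 2 + s22 * jsi 2 2 = 1"
  "jsi 2 1 = jsi 1 2"
  using dpos unfolding jsi_def apply (simp_all add: field_simps) by (simp_all add: \<delta>_def algebra_simps)

lemma uu_rel: "uu 1 = jsi 1 1 * qK + jsi 1 2 * rK" "uu 2 = jsi 2 1 * qK + jsi 2 2 * rK"
  using dpos unfolding jsi_def uu_def by (simp_all add: field_simps)

lemma AA_rel:
  "pK / \<delta> * (AA 1 1 * s11 + AA 2 1 * s12) = pK * jsi 2 1"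
  "pK / \<delta> * (AA 1 2 * s11 + AA 2 2 * s12) = pK * jsi 2 2"
  "pK / \<delta> * (AA 1 1 * s12 + AA 2 1 * s22) = - pK * jsi 1 1"
  "pK / \<delta> * (AA 1 2 * s12 + AA 2 2 * s22) = - pK * jsi 1 2"
  using dpos unfolding jsi_def AA_def by (simp_all add: field_simps)

lemma W_scalar:
  fixes m :: 2
  shows
  "complex_of_real (jsi 1 m) * complex_of_real s11 + complex_of_real (jsi 2 m) * complex_of_real s12
    + \<i> * complex_of_real \<beta> * (complex_of_real (jsi 2 m) * complex_of_real pK + \<i> * complex_of_real (\<beta> * uu m / ss) * complex_of_real qK)
   = (Cm \<beta>)$1$m * complex_of_real s11 + (Cm \<beta>)$2$m * complex_of_real s12" (is ?A)
  "complex_of_real (jsi 1 m) * complex_of_real s12 + complex_of_real (jsi 2 m) * complex_of_real s22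
    + \<i> * complex_of_real \<beta> * (- complex_of_real (jsi 1 m) * complex_of_real pK + \<i> * complex_of_real (\<beta> * uu m / ss) * complex_of_real rK)
   = (Cm \<beta>)$1$m * complex_of_real s12 + (Cm \<beta>)$2$m * complex_of_real s22" (is ?B)
  "\<i> * complex_of_real (\<beta> * uu m / ss) * complex_of_real ss
    + \<i> * complex_of_real \<beta> * (- complex_of_real (jsi 1 m) * complex_of_real qK - complex_of_real (jsi 2 m) * complex_of_real rK) = 0" (is ?C)
proof -
  have ss0: "ss \<noteq> 0" using ss_pos by simp
  have u1: "s11 * uu 1 + s12 * uu 2 = qK" and u2: "s12 * uu 1 + s22 * uu 2 = rK"
    unfolding uu_rel using jsi_rel by algebra+
  have jsym: "jsi i j = jsi j i" for i j unfolding jsi_def by auto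
  have um: "uu m = jsi 1 m * qK + jsi 2 m * rK" using uu_rel exhaust_2[of m] jsym by auto
  have AAm1: "pK / \<delta> * (AA 1 m * s11 + AA 2 m * s12) = pK * jsi 2 m"
    using AA_rel exhaust_2[of m] by auto
  have AAm2: "pK / \<delta> * (AA 1 m * s12 + AA 2 m * s22) = - pK * jsi 1 m"
    using AA_rel exhaust_2[of m] by auto
  show ?A
  proof -
    have re: "jsi 1 m * s11 + jsi 2 m * s12 - \<beta> * (\<beta> * uu m / ss * qK) =
        (jsi 1 m - \<beta>^2 / ss * uu 1 * uu m) * s11 + (jsi 2 m - \<beta>^2 / ss * uu 2 * uu m) * s12"
    proof -
      have "(jsi 1 m - \<beta>^2 / ss * uu 1 * uu m) * s11 + (jsi 2 m - \<beta>^2 / ss * uu 2 * uu m) * s12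
         = jsi 1 m * s11 + jsi 2 m * s12 - \<beta>^2 / ss * uu m * (s11 * uu 1 + s12 * uu 2)" by (simp add: algebra_simps)
      then show ?thesis unfolding u1 by (simp add: power2_eq_square algebra_simps)
    qed
    have im: "\<beta> * (jsi 2 m * pK) = \<beta> * (pK / \<delta> * (AA 1 m * s11 + AA 2 m * s12))"
      using AAm1 by (simp add: mult.commute)
    show ?thesis using re im dpos apply (simp add: complex_eq_iff Cm_def) by (simp add: field_simps)
  qed
  show ?B
  proof -
    have re: "jsi 1 m * s12 + jsi 2 m * s22 - \<beta> * (\<beta> * uu m / ss * rK) =
        (jsi 1 m - \<beta>^2 / ss * uu 1 * uu m) * s12 + (jsi 2 m - \<beta>^2 / ss * uu 2 * uu m) * s22"
    proof -
      have "(jsi 1 m - \<beta>^2 / ss * uu 1 * uu m) * s12 + (jsi 2 m - \<beta>^2 / ss * uu 2 * uu m) * s22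
         = jsi 1 m * s12 + jsi 2 m * s22 - \<beta>^2 / ss * uu m * (s12 * uu 1 + s22 * uu 2)" by (simp add: algebra_simps)
      then show ?thesis unfolding u2 by (simp add: power2_eq_square algebra_simps)
    qed
    have im: "- \<beta> * (jsi 1 m * pK) = \<beta> * (pK / \<delta> * (AA 1 m * s12 + AA 2 m * s22))"
      using AAm2 by (simp add: mult.commute)
    show ?thesis using re im dpos apply (simp add: complex_eq_iff Cm_def) by (simp add: field_simps)
  qed
  show ?C using um ss0 by (simp add: complex_eq_iff field_simps)
qed


lemma Ym_form: "Ym \<beta> m = cscale (complex_of_real (jsi 1 m)) e1 + cscale (complex_of_real (jsi 2 m)) e2
     + cscale (\<i> * complex_of_real (\<beta> * uu m / ss)) f" by (simp add: Ym_def)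

lemma inTC_e: "inTC e1" "inTC e2" "inTC f" using inTC_T e1T e2T fT by auto

lemma W_eq: "Ym \<beta> m + cscale (\<i> * complex_of_real \<beta>) (D (Ym \<beta> m)) = cscale ((Cm \<beta>)$1$m) e1 + cscale ((Cm \<beta>)$2$m) e2"
proof -
  define X where "X = Ym \<beta> m + cscale (\<i> * complex_of_real \<beta>) (D (Ym \<beta> m)) - (cscale ((Cm \<beta>)$1$m) e1 + cscale ((Cm \<beta>)$2$m) e2)"
  have iY: "inTC (Ym \<beta> m)" unfolding inTC_def Ym_def by blast
  have "inTC X" unfolding X_def using iY inTC_D inTC_e
    by (intro inTC_diff inTC_add inTC_cscale) auto
  moreover have "g e1 X = 0"
  proof -
    have "g e1 X = g e1 (Ym \<beta> m) + (\<i> * complex_of_real \<beta>) * g e1 (D (Ym \<beta> m)) - ((Cm \<beta>)$1$m * g e1 e1 + (Cm \<beta>)$2$m * g e1 e2)"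
      unfolding X_def by (simp only: gg_add2 gg_diff2 gg_cscale2)
    also have "\<dots> = 0" unfolding Ym_form g_lin3 gD_lin3 g_e11 g_e12 W_scalar(1) by simp
    finally show ?thesis .
  qed
  moreover have "g e2 X = 0"
  proof -
    have "g e2 X = g e2 (Ym \<beta> m) + (\<i> * complex_of_real \<beta>) * g e2 (D (Ym \<beta> m)) - ((Cm \<beta>)$1$m * g e2 e1 + (Cm \<beta>)$2$m * g e2 e2)"
      unfolding X_def by (simp only: gg_add2 gg_diff2 gg_cscale2)
    also have "\<dots> = 0" unfolding Ym_form g_lin3 gD_lin3 g_e21 g_e22 W_scalar(2) by simp
    finally show ?thesis .
  qed
  moreover have "g f X = 0"
  proof -
    have "g f X = g f (Ym \<beta> m) + (\<i> * complex_of_real \<beta>) * g f (D (Ym \<beta> m)) - ((Cm \<beta>)$1$m * g f e1 + (Cm \<beta>)$2$m * g f e2)"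
      unfolding X_def by (simp only: gg_add2 gg_diff2 gg_cscale2)
    also have "\<dots> = 0" unfolding Ym_form g_lin3 gD_lin3 g_fe1 g_fe2 W_scalar(3) by simp
    finally show ?thesis .
  qed
  ultimately have "X = 0" by (rule inTC_zero)
  then show ?thesis unfolding X_def by simp
qed


lemma Lsum:
  assumes b0: "0 \<le> \<beta>" and b1: "\<beta> \<le> 1"
  shows "cscale ((Cm \<beta>)$1$m) (logder \<beta> \<rho> (dR 1)) + cscale ((Cm \<beta>)$2$m) (logder \<beta> \<rho> (dR 2)) = Ym \<beta> m"
proof -
  have inj: "inj (Phi \<rho> ((1 + \<beta>) / 2) ((1 - \<beta>) / 2))" by (rule Phi_inj[OF sp]) (use b0 b1 in auto)
  have "Phi \<rho> ((1 + \<beta>) / 2) ((1 - \<beta>) / 2) (cscale ((Cm \<beta>)$1$m) (logder \<beta> \<rho> (dR 1)) + cscale ((Cm \<beta>)$2$m) (logder \<beta> \<rho> (dR 2)))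
      = cscale ((Cm \<beta>)$1$m) (dR 1) + cscale ((Cm \<beta>)$2$m) (dR 2)"
    by (simp add: Phi_add Phi_cscale logder_eq[OF sp b0 b1])
  also have "\<dots> = Phi \<rho> ((1 + \<beta>) / 2) ((1 - \<beta>) / 2) (Ym \<beta> m)"
    unfolding Phi_jp[OF sp] W_eq jp_add jp_cscale using dR_jp by metis
  finally show ?thesis using inj by (simp add: inj_eq)
qed

lemma Jmat_mul:
  assumes b0: "0 \<le> \<beta>" and b1: "\<beta> \<le> 1"
  shows "Jmat \<beta> \<rho> dR ** Cm \<beta> = mat 1"
proof -
  have e: "(Jmat \<beta> \<rho> dR ** Cm \<beta>)$k$m = g (logder 0 \<rho> (dR k)) (Ym \<beta> m)" for k m
  proof -
    have "(Jmat \<beta> \<rho> dR ** Cm \<beta>)$k$m = mtr (dR k ** logder \<beta> \<rho> (dR 1)) * (Cm \<beta>)$1$m + mtr (dR k ** logder \<beta> \<rho> (dR 2)) * (Cm \<beta>)$2$m"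
      by (simp add: matrix_matrix_mult_def sum_2 Jmat_def)
    also have "\<dots> = mtr (dR k ** (cscale ((Cm \<beta>)$1$m) (logder \<beta> \<rho> (dR 1)) + cscale ((Cm \<beta>)$2$m) (logder \<beta> \<rho> (dR 2))))"
      by (simp add: matrix_add_ldistrib mtr_add cscale_mult_right[symmetric] mtr_cscale mult.commute)
    also have "\<dots> = g (logder 0 \<rho> (dR k)) (Ym \<beta> m)" unfolding Lsum[OF b0 b1] gg_def using dR_jp by metis
    finally show ?thesis .
  qed
  have "g (logder 0 \<rho> (dR k)) (Ym \<beta> m) = (if k = m then 1 else 0)" for k m
    using exhaust_2[of k] exhaust_2[of m] jsi_rel
    by (auto simp: Ym_form g_lin3 mult.commute simp flip: of_real_mult of_real_add)
  then show ?thesis by (simp add: vec_eq_iff e mat_def)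
qed

lemma inv_unique: "(A::'a::field^'k^'k) ** B = mat 1 \<Longrightarrow> matrix_inv A = B"
proof -
  assume AB: "A ** B = mat 1"
  then have BA: "B ** A = mat 1" using matrix_left_right_inverse by blast
  have ex: "\<exists>A'. A ** A' = mat 1 \<and> A' ** A = mat 1" using AB BA by blast
  have "A ** matrix_inv A = mat 1 \<and> matrix_inv A ** A = mat 1"
    unfolding matrix_inv_def by (rule someI_ex[OF ex])
  then have "matrix_inv A = matrix_inv A ** (A ** B)" using AB by simp
  also have "\<dots> = B" using \<open>A ** matrix_inv A = mat 1 \<and> matrix_inv A ** A = mat 1\<close> by (simp add: matrix_mul_assoc)
  finally show ?thesis .
qed

lemma Jinv:
  assumes "0 \<le> \<beta>" "\<beta> \<le> 1"
  shows "matrix_inv (Jmat \<beta> \<rho> dR) = Cm \<beta>"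
  by (rule inv_unique[OF Jmat_mul[OF assms]])

end



lemma ReTr2: "Re (mtr (cmat (G::real^2^2) ** C)) = G$1$1 * Re (C$1$1) + G$1$2 * Re (C$2$1) + G$2$1 * Re (C$1$2) + G$2$2 * Re (C$2$2)"
  by (simp add: mtr_def sum_2 matrix_matrix_mult_def cmat_def)

lemma mIm_nth[simp]: "(mIm C)$i$j = Im (C$i$j)" by (simp add: mIm_def)
lemma mRe_nth[simp]: "(mRe C)$i$j = Re (C$i$j)" by (simp add: mRe_def)
lemma cmat_nth[simp]: "(cmat A)$i$j = complex_of_real (A$i$j)" by (simp add: cmat_def)

definition sdet :: "real^2^2 \<Rightarrow> real" where
  "sdet G = sqrt (G$1$1*G$2$2 - G$1$2*G$2$1)"

lemma sdet_pos: "real_pos_def G \<Longrightarrow> 0 < sdet G"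
  using posdef_props by (simp add: sdet_def)

lemma sdet_sq: "real_pos_def G \<Longrightarrow> sdet G * sdet G = G$1$1*G$2$2 - G$1$2*G$2$1"
  using posdef_props[of G] by (simp add: sdet_def)

lemma val_formula:
  assumes G: "real_pos_def G" and h: "Im (C$1$1) = 0" "Im (C$2$2) = 0" "Im (C$2$1) = - Im (C$1$2)"
  shows "Re (mtr (cmat G ** C)) + mtr (mabs (msqrt G ** mIm C ** msqrt G))
     = G$1$1 * Re (C$1$1) + G$1$2 * Re (C$2$1) + G$2$1 * Re (C$1$2) + G$2$2 * Re (C$2$2) + 2 * sdet G * \<bar>Im (C$1$2)\<bar>"
  unfolding ReTr2 sdet_def by (subst tabs[OF G]) (use h in simp_all)

context setting begin

lemma ss_ne0: "ss \<noteq> 0" using ss_pos by simp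

definition "c0 (G::real^2^2) = G$1$1 * jsi 1 1 + G$1$2 * jsi 2 1 + G$2$1 * jsi 1 2 + G$2$2 * jsi 2 2"
definition "QQ (G::real^2^2) = G$1$1 * uu 1 * uu 1 + G$1$2 * uu 2 * uu 1 + G$2$1 * uu 1 * uu 2 + G$2$2 * uu 2 * uu 2"
definition "w0 = pK / \<delta>"

lemma Cm_nth: "(Cm \<beta>)$i$j = Complex (jsi i j - \<beta>^2 / ss * uu i * uu j) (\<beta> * pK / \<delta> * AA i j)"
  by (simp add: Cm_def)

lemma Cbeta_formula:
  assumes G: "real_pos_def G" and b0: "0 \<le> \<beta>" and b1: "\<beta> \<le> 1"
  shows "Cbeta \<beta> G \<rho> dR = c0 G - \<beta>^2 * QQ G / ss + \<beta> * (2 * sdet G * \<bar>w0\<bar>)"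
proof -
  have "Cbeta \<beta> G \<rho> dR = Re (mtr (cmat G ** Cm \<beta>)) + mtr (mabs (msqrt G ** mIm (Cm \<beta>) ** msqrt G))"
    unfolding Cbeta_def Let_def Jinv[OF b0 b1] ..
  also have "\<dots> = c0 G - \<beta>^2 * QQ G / ss + \<beta> * (2 * sdet G * \<bar>w0\<bar>)"
    by (subst val_formula[OF G]) (use b0 ss_ne0 in \<open>simp_all add: Cm_nth AA_def c0_def QQ_def w0_def abs_mult field_simps\<close>)
  finally show ?thesis .
qed

lemma QQ_pos: "real_pos_def G \<Longrightarrow> (uu 1 \<noteq> 0 \<or> uu 2 \<noteq> 0) \<Longrightarrow> 0 < QQ G"
proof -
  assume G: "real_pos_def G" and u: "uu 1 \<noteq> 0 \<or> uu 2 \<noteq> 0"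
  have nz: "vector [uu 1, uu 2] \<noteq> (0::real^2)"
  proof
    assume h: "vector [uu 1, uu 2] = (0::real^2)"
    have "uu 1 = 0" using arg_cong[OF h, of "\<lambda>v. v$1"] by simp
    moreover have "uu 2 = 0" using arg_cong[OF h, of "\<lambda>v. v$2"] by simp
    ultimately show False using u by simp
  qed
  have allx: "\<And>x. x \<noteq> 0 \<Longrightarrow> 0 < x \<bullet> (G *v x)" using G unfolding real_pos_def_def by simp
  have "0 < vector [uu 1, uu 2] \<bullet> (G *v vector [uu 1, uu 2])" by (rule allx[OF nz])
  then show ?thesis unfolding quad2 QQ_def by (simp add: algebra_simps)
qed

lemma QQ_nonneg: "real_pos_def G \<Longrightarrow> 0 \<le> QQ G"
proof (cases "uu 1 \<noteq> 0 \<or> uu 2 \<noteq> 0")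
  case True assume G: "real_pos_def G" then show ?thesis using QQ_pos[OF G True] by simp
next
  case False then show ?thesis by (simp add: QQ_def)
qed

lemma beta_hat_formula:
  assumes G: "real_pos_def G"
  shows "beta_hat G \<rho> dR = (if uu 1 = 0 \<and> uu 2 = 0 then \<infinity> else ereal ((2 * sdet G * \<bar>w0\<bar>) / (2 * (QQ G / ss))))"
proof -
  have J0: "matrix_inv (Jmat 0 \<rho> dR) = Cm 0" by (rule Jinv) auto
  have J1: "matrix_inv (Jmat 1 \<rho> dR) = Cm 1" by (rule Jinv) auto
  have ss0: "ss \<noteq> 0" using ss_pos by simp
  have eqiff: "(Cm 0 = cmat (mRe (Cm 1))) \<longleftrightarrow> (uu 1 = 0 \<and> uu 2 = 0)"
  proof
    assume "Cm 0 = cmat (mRe (Cm 1))"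
    then have "\<forall>i j. (Cm 0)$i$j = (cmat (mRe (Cm 1)))$i$j" by simp
    then have "uu 1 * uu 1 / ss = 0" "uu 2 * uu 2 / ss = 0"
      by (auto simp: Cm_nth complex_eq_iff dest: spec[of _ 1] spec[of _ 2])
    then show "uu 1 = 0 \<and> uu 2 = 0" using ss0 by simp
  next
    assume "uu 1 = 0 \<and> uu 2 = 0"
    then have "uu i = 0" for i using exhaust_2[of i] by auto
    then show "Cm 0 = cmat (mRe (Cm 1))" by (simp add: vec_eq_iff Cm_nth complex_eq_iff)
  qed
  have num: "mtr (mabs (msqrt G ** mIm (Cm 1) ** msqrt G)) = 2 * sdet G * \<bar>w0\<bar>"
    unfolding sdet_def by (subst tabs[OF G]) (simp_all add: Cm_nth AA_def w0_def)
  have den: "Re (mtr (cmat G ** (Cm 0 - cmat (mRe (Cm 1))))) = QQ G / ss"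
    unfolding ReTr2 using ss_ne0 by (simp add: Cm_nth QQ_def field_simps)
  show ?thesis unfolding beta_hat_def Let_def J0 J1 eqiff num den by simp
qed

end



definition Fb :: "complex^'n^'n \<Rightarrow> real \<Rightarrow> complex^'n^'n \<Rightarrow> complex^'n^'n \<Rightarrow> complex" where
  "Fb \<rho> \<beta> X Y = mtr (cadj X ** Phi \<rho> ((1 + \<beta>) / 2) ((1 - \<beta>) / 2) Y)"

lemma Fb_add1: "Fb \<rho> \<beta> (X1 + X2) Y = Fb \<rho> \<beta> X1 Y + Fb \<rho> \<beta> X2 Y"
  by (simp add: Fb_def cadj_add matrix_add_rdistrib mtr_add)
lemma Fb_add2: "Fb \<rho> \<beta> X (Y1 + Y2) = Fb \<rho> \<beta> X Y1 + Fb \<rho> \<beta> X Y2"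
  by (simp add: Fb_def Phi_add matrix_add_ldistrib mtr_add)
lemma Fb_diff1: "Fb \<rho> \<beta> (X1 - X2) Y = Fb \<rho> \<beta> X1 Y - Fb \<rho> \<beta> X2 Y"
  by (simp add: Fb_def cadj_diff matrix_diff_rdistrib mtr_diff)
lemma Phi_diff: "Phi \<rho> a b (X - Y) = Phi \<rho> a b X - Phi \<rho> a b Y"
  using linear_diff[OF Phi_linear] by blast
lemma Fb_diff2: "Fb \<rho> \<beta> X (Y1 - Y2) = Fb \<rho> \<beta> X Y1 - Fb \<rho> \<beta> X Y2"
  by (simp add: Fb_def Phi_diff matrix_diff_ldistrib mtr_diff)
lemma Fb_cscale1: "Fb \<rho> \<beta> (cscale a X) Y = cnj a * Fb \<rho> \<beta> X Y"
  by (simp add: Fb_def cadj_cscale cscale_mult_left[symmetric] mtr_cscale)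
lemma Fb_cscale2: "Fb \<rho> \<beta> X (cscale a Y) = a * Fb \<rho> \<beta> X Y"
  by (simp add: Fb_def Phi_cscale cscale_mult_right[symmetric] mtr_cscale)

lemma Fb_expand: "Fb \<rho> \<beta> X Y = complex_of_real ((1 + \<beta>) / 2) * mtr (cadj X ** (\<rho> ** Y)) + complex_of_real ((1 - \<beta>) / 2) * mtr (cadj X ** (Y ** \<rho>))"
  by (simp add: Fb_def Phi_def matrix_add_ldistrib mtr_add cscale_mult_right[symmetric] mtr_cscale)

lemma Fb_herm:
  assumes h: "hermitian \<rho>"
  shows "Fb \<rho> \<beta> Y X = cnj (Fb \<rho> \<beta> X Y)"
proof -
  have 1: "cnj (mtr (cadj X ** (\<rho> ** Y))) = mtr (cadj Y ** (\<rho> ** X))"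
    using h by (simp add: mtr_cadj[symmetric] cadj_mult hermitian_def matrix_mul_assoc)
  have 2: "cnj (mtr (cadj X ** (Y ** \<rho>))) = mtr (cadj Y ** (X ** \<rho>))"
  proof -
    have "cnj (mtr (cadj X ** (Y ** \<rho>))) = mtr (\<rho> ** cadj Y ** X)"
      using h by (simp add: mtr_cadj[symmetric] cadj_mult hermitian_def matrix_mul_assoc)
    also have "\<dots> = mtr (cadj Y ** (X ** \<rho>))"
      using mtr_comm[of "\<rho>" "cadj Y ** X"] by (simp add: matrix_mul_assoc)
    finally show ?thesis .
  qed
  show ?thesis unfolding Fb_expand by (simp add: 1 2)
qed

lemma Fb_pos:
  assumes sp: "strictly_pos \<rho>" and b0: "0 \<le> \<beta>" and b1: "\<beta> \<le> 1"
  shows "0 \<le> Re (Fb \<rho> \<beta> V V)"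
proof -
  have p1: "0 \<le> Re (mtr (cadj V ** (\<rho> ** V)))"
    using psd_tr_nonneg[OF strictly_pos_psd[OF sp]] by blast
  have "mtr (cadj V ** (V ** \<rho>)) = mtr (cadj (cadj V) ** (\<rho> ** cadj V))"
    using mtr_comm[of "cadj V" "V ** \<rho>"] by (simp add: matrix_mul_assoc)
  then have p2: "0 \<le> Re (mtr (cadj V ** (V ** \<rho>)))"
    using psd_tr_nonneg[OF strictly_pos_psd[OF sp], of "cadj V"] by simp
  have "Re (Fb \<rho> \<beta> V V) = (1 + \<beta>) / 2 * Re (mtr (cadj V ** (\<rho> ** V))) + (1 - \<beta>) / 2 * Re (mtr (cadj V ** (V ** \<rho>)))"
    unfolding Fb_expand by simp
  also have "\<dots> \<ge> 0" using p1 p2 b0 b1 by (simp add: add_nonneg_nonneg mult_nonneg_nonneg)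
  finally show ?thesis .
qed

lemma jp_herm: "hermitian \<rho> \<Longrightarrow> hermitian X \<Longrightarrow> hermitian (jp \<rho> X)"
  by (simp add: hermitian_def jp_def Phi_def cadj_add cadj_cscale cadj_mult add.commute)

context setting begin

lemma g_eY: "g (logder 0 \<rho> (dR k)) (Ym \<beta> m) = (if k = m then 1 else 0)"
    using exhaust_2[of k] exhaust_2[of m] jsi_rel
    by (auto simp: Ym_form g_lin3 mult.commute simp flip: of_real_mult of_real_add)

lemma dR_herm: "hermitian (dR k)"
proof -
  have "hermitian (logder 0 \<rho> (dR k))" using hermT eT by blast
  then have "hermitian (jp \<rho> (logder 0 \<rho> (dR k)))" by (rule jp_herm[OF herm_rho])
  then show ?thesis using dR_jp[of k] by simp
qed

lemma jsi_sym: "jsi i j = jsi j i" unfolding jsi_def by auto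

lemma Cm_herm: "(Cm \<beta>)$j$k = cnj ((Cm \<beta>)$k$j)"
  using exhaust_2[of j] exhaust_2[of k] jsi_sym[of 1 2] by (auto simp: Cm_nth AA_def complex_eq_iff)

lemma Phi_Ym:
  assumes b0: "0 \<le> \<beta>" and b1: "\<beta> \<le> 1"
  shows "Phi \<rho> ((1 + \<beta>) / 2) ((1 - \<beta>) / 2) (Ym \<beta> m) = cscale ((Cm \<beta>)$1$m) (dR 1) + cscale ((Cm \<beta>)$2$m) (dR 2)"
  unfolding Lsum[OF b0 b1, symmetric] by (simp add: Phi_add Phi_cscale logder_eq[OF sp b0 b1])

lemma FY_Y:
  assumes b0: "0 \<le> \<beta>" and b1: "\<beta> \<le> 1"
  shows "Fb \<rho> \<beta> (Ym \<beta> k) (Ym \<beta> m) = (Cm \<beta>)$k$m"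
proof -
  have t: "mtr (cadj (Ym \<beta> k) ** dR j) = (if j = k then 1 else 0)" for j
  proof -
    have "mtr (cadj (Ym \<beta> k) ** dR j) = cnj (mtr (cadj (dR j) ** Ym \<beta> k))"
      by (simp add: mtr_cadj[symmetric] cadj_mult)
    also have "\<dots> = cnj (g (logder 0 \<rho> (dR j)) (Ym \<beta> k))"
      using dR_herm[of j] dR_jp[of j] unfolding hermitian_def gg_def by metis
    finally show ?thesis by (simp add: g_eY)
  qed
  show ?thesis unfolding Fb_def Phi_Ym[OF b0 b1]
    using exhaust_2[of k] by (auto simp: matrix_add_ldistrib mtr_add cscale_mult_right[symmetric] mtr_cscale t)
qed

context
  fixes B :: "2 \<Rightarrow> complex^'n^'n"
  assumes Bh: "\<forall>j. hermitian (B j)"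
    and Bc: "\<forall>i j. mtr (dR i ** B j) = (if i = j then 1 else 0)"
begin

lemma FB_Y:
  assumes b0: "0 \<le> \<beta>" and b1: "\<beta> \<le> 1"
  shows "Fb \<rho> \<beta> (B i) (Ym \<beta> m) = (Cm \<beta>)$i$m"
proof -
  have t: "mtr (cadj (B i) ** dR j) = (if j = i then 1 else 0)" for j
  proof -
    have "cadj (B i) = B i" using Bh hermitian_def by blast
    then have "mtr (cadj (B i) ** dR j) = mtr (dR j ** B i)" using mtr_comm[of "B i" "dR j"] by simp
    also have "\<dots> = (if j = i then 1 else 0)" using Bc by blast
    finally show ?thesis .
  qed
  show ?thesis unfolding Fb_def Phi_Ym[OF b0 b1]
    using exhaust_2[of i] by (auto simp: matrix_add_ldistrib mtr_add cscale_mult_right[symmetric] mtr_cscale t)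
qed

lemma FY_B:
  assumes b0: "0 \<le> \<beta>" and b1: "\<beta> \<le> 1"
  shows "Fb \<rho> \<beta> (Ym \<beta> k) (B j) = (Cm \<beta>)$k$j"
proof -
  have "Fb \<rho> \<beta> (Ym \<beta> k) (B j) = cnj (Fb \<rho> \<beta> (B j) (Ym \<beta> k))" by (rule Fb_herm[OF herm_rho])
  also have "\<dots> = cnj ((Cm \<beta>)$j$k)" by (simp add: FB_Y[OF b0 b1])
  also have "\<dots> = (Cm \<beta>)$k$j" using Cm_herm[of \<beta> k j] by simp
  finally show ?thesis .
qed

lemma Z_herm: "(Zmat \<rho> B)$j$i = cnj ((Zmat \<rho> B)$i$j)"
proof -
  have "cnj ((Zmat \<rho> B)$i$j) = mtr (B i ** B j ** \<rho>)"
    using Bh herm_rho by (simp add: Zmat_def mtr_cadj[symmetric] cadj_mult hermitian_def matrix_mul_assoc)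
  also have "\<dots> = (Zmat \<rho> B)$j$i"
    using mtr_comm[of "B i ** B j" \<rho>] by (simp add: Zmat_def matrix_mul_assoc)
  finally show ?thesis by simp
qed

lemma FB_B: "Fb \<rho> \<beta> (B i) (B j) = complex_of_real ((1 + \<beta>) / 2) * (Zmat \<rho> B)$i$j + complex_of_real ((1 - \<beta>) / 2) * (Zmat \<rho> B)$j$i"
proof -
  have 1: "mtr (B i ** (\<rho> ** B j)) = (Zmat \<rho> B)$i$j"
    using mtr_comm[of "B i" "\<rho> ** B j"] by (simp add: Zmat_def)
  have 2: "mtr (B i ** (B j ** \<rho>)) = (Zmat \<rho> B)$j$i"
    using mtr_comm[of "B i ** B j" \<rho>] by (simp add: Zmat_def matrix_mul_assoc)
  have "cadj (B i) = B i" using Bh hermitian_def by blast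
  then show ?thesis unfolding Fb_expand by (simp add: 1 2)
qed


lemma quad_form:
  assumes b0: "0 \<le> \<beta>" and b1: "\<beta> \<le> 1"
  defines "P \<equiv> \<lambda>i j. Fb \<rho> \<beta> (B i) (B j) - (Cm \<beta>)$i$j"
  shows "Fb \<rho> \<beta> ((cscale a (B 1) + cscale b (B 2)) - (cscale a (Ym \<beta> 1) + cscale b (Ym \<beta> 2)))
                    ((cscale a (B 1) + cscale b (B 2)) - (cscale a (Ym \<beta> 1) + cscale b (Ym \<beta> 2)))
       = cnj a * P 1 1 * a + cnj a * P 1 2 * b + cnj b * P 2 1 * a + cnj b * P 2 2 * b"
  unfolding P_def
  by (simp only: Fb_add1 Fb_add2 Fb_diff1 Fb_diff2 Fb_cscale1 Fb_cscale2 FB_Y[OF b0 b1] FY_B[OF b0 b1] FY_Y[OF b0 b1])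
     (simp add: algebra_simps)

lemma lower:
  assumes G: "real_pos_def G" and b0: "0 \<le> \<beta>" and b1: "\<beta> \<le> 1"
  shows "Cbeta \<beta> G \<rho> dR \<le> Re (mtr (cmat G ** Zmat \<rho> B)) + mtr (mabs (msqrt G ** mIm (Zmat \<rho> B) ** msqrt G))"
proof -
  define P where "P = (\<lambda>i j. Fb \<rho> \<beta> (B i) (B j) - (Cm \<beta>)$i$j)"
  define Z where "Z = Zmat \<rho> B"
  define C where "C = Cm \<beta>"
  have q: "0 \<le> Re (cnj a * P 1 1 * a + cnj a * P 1 2 * b + cnj b * P 2 1 * a + cnj b * P 2 2 * b)" for a b
    using Fb_pos[OF sp b0 b1, of "(cscale a (B 1) + cscale b (B 2)) - (cscale a (Ym \<beta> 1) + cscale b (Ym \<beta> 2))"]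
    by (simp only: quad_form[OF b0 b1] P_def)
  have Zh: "Z$j$i = cnj (Z$i$j)" for i j unfolding Z_def by (rule Z_herm)
  have Ch: "C$j$i = cnj (C$i$j)" for i j unfolding C_def by (rule Cm_herm)
  have Pij: "P i j = complex_of_real ((1 + \<beta>) / 2) * Z$i$j + complex_of_real ((1 - \<beta>) / 2) * Z$j$i - C$i$j" for i j
    unfolding P_def Z_def C_def FB_B ..
  have ReP: "Re (P i j) = Re (Z$i$j) - Re (C$i$j)" for i j
    unfolding Pij using arg_cong[OF Zh[of i j], of Re] by (simp add: field_simps)
  have ImP12: "Im (P 1 2) = \<beta> * Im (Z$1$2) - Im (C$1$2)"
    unfolding Pij using arg_cong[OF Zh[of 1 2], of Im] by (simp add: field_simps)
  have ImZ: "Im (Z$1$1) = 0" "Im (Z$2$2) = 0" "Im (Z$2$1) = - Im (Z$1$2)"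
    using arg_cong[OF Zh[of 1 1], of Im] arg_cong[OF Zh[of 2 2], of Im] arg_cong[OF Zh[of 1 2], of Im] by simp_all
  have ImC: "Im (C$1$1) = 0" "Im (C$2$2) = 0" "Im (C$2$1) = - Im (C$1$2)"
    using arg_cong[OF Ch[of 1 1], of Im] arg_cong[OF Ch[of 2 2], of Im] arg_cong[OF Ch[of 1 2], of Im] by simp_all
  have ReZ: "Re (Z$2$1) = Re (Z$1$2)" using arg_cong[OF Zh[of 1 2], of Re] by simp
  have ReC: "Re (C$2$1) = Re (C$1$2)" using arg_cong[OF Ch[of 1 2], of Re] by simp
  have ImP: "Im (P 1 1) = 0" "Im (P 2 2) = 0" using ImZ ImC unfolding Pij by simp_all
  have P21: "P 2 1 = cnj (P 1 2)" unfolding Pij using Zh[of 1 2] Ch[of 1 2] by simp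
  note pc = psd_c2[OF ImP P21 q]
  note ti = trG_ineq[OF G pc]
  note gp = posdef_props[OF G]
  have VZ: "Re (mtr (cmat G ** Z)) + mtr (mabs (msqrt G ** mIm Z ** msqrt G))
     = G$1$1 * Re (Z$1$1) + 2 * G$1$2 * Re (Z$1$2) + G$2$2 * Re (Z$2$2) + 2 * sdet G * \<bar>Im (Z$1$2)\<bar>"
    unfolding val_formula[OF G ImZ] ReZ gp(1) by simp
  have VC: "Cbeta \<beta> G \<rho> dR
     = G$1$1 * Re (C$1$1) + 2 * G$1$2 * Re (C$1$2) + G$2$2 * Re (C$2$2) + 2 * sdet G * \<bar>Im (C$1$2)\<bar>"
    unfolding Cbeta_def Let_def Jinv[OF b0 b1] C_def[symmetric] val_formula[OF G ImC] ReC gp(1) by simp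
  have sd: "0 < sdet G" by (rule sdet_pos[OF G])
  have abs_ineq: "\<bar>Im (C$1$2)\<bar> \<le> \<bar>\<beta> * Im (Z$1$2) - Im (C$1$2)\<bar> + \<bar>Im (Z$1$2)\<bar>"
  proof -
    have "\<bar>\<beta> * Im (Z$1$2)\<bar> \<le> \<bar>Im (Z$1$2)\<bar>" using b0 b1 by (simp add: abs_mult mult_left_le_one_le)
    then show ?thesis by linarith
  qed
  have "2 * sdet G * \<bar>Im (C$1$2)\<bar> \<le> 2 * sdet G * \<bar>\<beta> * Im (Z$1$2) - Im (C$1$2)\<bar> + 2 * sdet G * \<bar>Im (Z$1$2)\<bar>"
  proof -
    have "sdet G * (2 * \<bar>Im (C$1$2)\<bar>) \<le> sdet G * (2 * \<bar>\<beta> * Im (Z$1$2) - Im (C$1$2)\<bar> + 2 * \<bar>Im (Z$1$2)\<bar>)"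
      using abs_ineq sd by (intro mult_left_mono) auto
    then show ?thesis by (simp add: algebra_simps)
  qed
  moreover have "2 * sdet G * \<bar>\<beta> * Im (Z$1$2) - Im (C$1$2)\<bar>
     \<le> G$1$1 * (Re (Z$1$1) - Re (C$1$1)) + 2 * G$1$2 * (Re (Z$1$2) - Re (C$1$2)) + G$2$2 * (Re (Z$2$2) - Re (C$2$2))"
    using ti unfolding ReP ImP12 sdet_def by simp
  ultimately show ?thesis unfolding VC Z_def[symmetric] VZ by (simp add: algebra_simps)
qed

end

end



context setting begin

definition Bst :: "real \<Rightarrow> real \<Rightarrow> 2 \<Rightarrow> complex^'n^'n" where
  "Bst t1 t2 j = cscale (complex_of_real (jsi 1 j)) e1 + cscale (complex_of_real (jsi 2 j)) e2
      + cscale (complex_of_real (if j = 1 then t1 else t2)) f"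

lemma Bst_T: "Bst t1 t2 j \<in> T"
  unfolding Bst_def scaleR_cscale[symmetric] using e1T e2T fT subT
  by (simp add: subspace_add scaleR_T)

lemma Bst_herm: "\<forall>j. hermitian (Bst t1 t2 j)" using Bst_T hermT by blast

lemma Bst_con: "\<forall>i j. mtr (dR i ** Bst t1 t2 j) = (if i = j then 1 else 0)"
proof (intro allI)
  fix i j
  have "mtr (dR i ** Bst t1 t2 j) = g (logder 0 \<rho> (dR i)) (Bst t1 t2 j)"
    unfolding gg_def using dR_jp by metis
  also have "\<dots> = (if i = j then 1 else 0)"
    using exhaust_2[of i] exhaust_2[of j] jsi_rel
    by (auto simp: Bst_def g_lin3 mult.commute simp flip: of_real_mult of_real_add)
  finally show "mtr (dR i ** Bst t1 t2 j) = (if i = j then 1 else 0)" .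
qed

lemma g1_lin3:
  "g (cscale a e1 + cscale b e2 + cscale c f) X = a * g e1 X + b * g e2 X + c * g f X"
  by (simp add: gg_add1 gg_cscale1)

definition "tt t1 t2 j = (if j = 1 then t1 else t2)"

lemma Bst_form: "Bst t1 t2 j = cscale (complex_of_real (jsi 1 j)) e1 + cscale (complex_of_real (jsi 2 j)) e2
      + cscale (complex_of_real (tt t1 t2 j)) f" by (simp add: Bst_def tt_def)

lemma jsi_det: "jsi 1 1 * jsi 2 2 - jsi 1 2 * jsi 2 1 = 1 / \<delta>"
  using dpos unfolding jsi_def by (simp add: field_simps) (simp add: \<delta>_def power2_eq_square algebra_simps)

lemma g_BB: "g (Bst t1 t2 j) (Bst t1 t2 i) = complex_of_real (jsi j i + ss * tt t1 t2 j * tt t1 t2 i)"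
proof -
  have "g (Bst t1 t2 j) (Bst t1 t2 i) = complex_of_real (jsi 1 j * (jsi 1 i * s11 + jsi 2 i * s12) + jsi 2 j * (jsi 1 i * s12 + jsi 2 i * s22)
        + ss * tt t1 t2 j * tt t1 t2 i)"
    unfolding Bst_form g1_lin3 g_lin3 by (simp add: algebra_simps)
  also have "jsi 1 j * (jsi 1 i * s11 + jsi 2 i * s12) + jsi 2 j * (jsi 1 i * s12 + jsi 2 i * s22) = jsi j i"
  proof -
    have r1: "jsi 1 i * s11 + jsi 2 i * s12 = (if i = 1 then 1 else 0)"
      using exhaust_2[of i] jsi_rel by (auto simp: mult.commute)
    have r2: "jsi 1 i * s12 + jsi 2 i * s22 = (if i = 2 then 1 else 0)"
      using exhaust_2[of i] jsi_rel by (auto simp: mult.commute)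
    show ?thesis unfolding r1 r2 using exhaust_2[of i] jsi_sym by auto
  qed
  finally show ?thesis .
qed


lemma gD_B21: "g (Bst t1 t2 2) (D (Bst t1 t2 1)) = complex_of_real (- w0 + t1 * uu 2 - t2 * uu 1)"
proof -
  have "g (Bst t1 t2 2) (D (Bst t1 t2 1)) = complex_of_real (pK * (jsi 1 2 * jsi 2 1 - jsi 2 2 * jsi 1 1)
      + t1 * (jsi 1 2 * qK + jsi 2 2 * rK) - t2 * (jsi 1 1 * qK + jsi 2 1 * rK))"
    unfolding Bst_form g1_lin3 gD_lin3 by (simp add: tt_def algebra_simps)
  also have "jsi 1 2 * jsi 2 1 - jsi 2 2 * jsi 1 1 = - 1 / \<delta>" using jsi_det by (simp add: algebra_simps)
  also have "jsi 1 2 * qK + jsi 2 2 * rK = uu 2" using uu_rel jsi_sym[of 1 2] by simp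
  also have "jsi 1 1 * qK + jsi 2 1 * rK = uu 1" using uu_rel jsi_sym[of 1 2] by simp
  finally show ?thesis by (simp add: w0_def)
qed

lemma gD_Bself: "g (Bst t1 t2 j) (D (Bst t1 t2 j)) = 0" by (rule gg_D_self[OF sp])

lemma Z_Bst: "(Zmat \<rho> (Bst t1 t2))$i$j = g (Bst t1 t2 j) (Bst t1 t2 i) - \<i> * g (Bst t1 t2 j) (D (Bst t1 t2 i))"
  unfolding Zmat_def using tr_rho_gg[OF sp] by (simp add: matrix_mul_assoc[symmetric])

lemma V_Bst:
  assumes G: "real_pos_def G"
  shows "Re (mtr (cmat G ** Zmat \<rho> (Bst t1 t2))) + mtr (mabs (msqrt G ** mIm (Zmat \<rho> (Bst t1 t2)) ** msqrt G))
     = c0 G + ss * (G$1$1 * t1 * t1 + G$1$2 * t1 * t2 + G$2$1 * t2 * t1 + G$2$2 * t2 * t2) + 2 * sdet G * \<bar>w0 - t1 * uu 2 + t2 * uu 1\<bar>"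
proof -
  define Z where "Z = Zmat \<rho> (Bst t1 t2)"
  have Zh: "Z$j$i = cnj (Z$i$j)" for i j unfolding Z_def by (rule Z_herm[OF Bst_herm Bst_con])
  have Z11: "Z$1$1 = complex_of_real (jsi 1 1 + ss * t1 * t1)"
    unfolding Z_def Z_Bst g_BB gD_Bself by (simp add: tt_def)
  have Z22: "Z$2$2 = complex_of_real (jsi 2 2 + ss * t2 * t2)"
    unfolding Z_def Z_Bst g_BB gD_Bself by (simp add: tt_def)
  have Z12: "Z$1$2 = Complex (jsi 2 1 + ss * t2 * t1) (w0 - t1 * uu 2 + t2 * uu 1)"
    unfolding Z_def Z_Bst g_BB gD_B21 by (simp add: tt_def complex_eq_iff)
  have Z21: "Z$2$1 = Complex (jsi 2 1 + ss * t2 * t1) (- (w0 - t1 * uu 2 + t2 * uu 1))"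
    using Zh[of 1 2] unfolding Z12 by (simp add: complex_eq_iff)
  have ImZ: "Im (Z$1$1) = 0" "Im (Z$2$2) = 0" "Im (Z$2$1) = - Im (Z$1$2)" using Z11 Z22 Z12 Z21 by simp_all
  show ?thesis unfolding Z_def[symmetric] val_formula[OF G ImZ]
    unfolding Z11 Z22 Z12 Z21 c0_def using jsi_sym[of 1 2] by (simp add: algebra_simps)
qed


definition "bstar G = (if beta_hat G \<rho> dR \<ge> 1 then 1 else real_of_ereal (beta_hat G \<rho> dR))"

lemma attain:
  assumes G: "real_pos_def G"
  shows "0 \<le> bstar G \<and> bstar G \<le> 1 \<and> (\<exists>t1 t2.
     Re (mtr (cmat G ** Zmat \<rho> (Bst t1 t2))) + mtr (mabs (msqrt G ** mIm (Zmat \<rho> (Bst t1 t2)) ** msqrt G)) = Cbeta (bstar G) G \<rho> dR)"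
proof -
  define Q where "Q = QQ G"
  define sd where "sd = sdet G"
  define a b c where "a = G$1$1" and "b = G$1$2" and "c = G$2$2"
  have gp: "G$2$1 = b" using posdef_props[OF G] b_def by simp
  have sd0: "0 < sd" using sdet_pos[OF G] sd_def by simp
  have sdsq: "sd * sd = a * c - b * b" using sdet_sq[OF G] gp by (simp add: sd_def a_def b_def c_def)
  have ss0: "0 < ss" by (rule ss_pos)
  have Qd: "Q = a * uu 1 * uu 1 + 2 * b * uu 1 * uu 2 + c * uu 2 * uu 2"
    unfolding Q_def QQ_def a_def[symmetric] b_def[symmetric] c_def[symmetric] gp by (simp add: algebra_simps)
  define t1 where "t1 = (\<lambda>\<mu>::real. \<mu> * (- c * uu 2 - b * uu 1))"
  define t2 where "t2 = (\<lambda>\<mu>::real. \<mu> * (b * uu 2 + a * uu 1))"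
  have V: "Re (mtr (cmat G ** Zmat \<rho> (Bst (t1 \<mu>) (t2 \<mu>)))) + mtr (mabs (msqrt G ** mIm (Zmat \<rho> (Bst (t1 \<mu>) (t2 \<mu>))) ** msqrt G))
     = c0 G + ss * (\<mu>^2 * (sd * sd) * Q) + 2 * sd * \<bar>w0 + \<mu> * Q\<bar>" for \<mu>
  proof -
    have h1: "G$1$1 * t1 \<mu> * t1 \<mu> + G$1$2 * t1 \<mu> * t2 \<mu> + G$2$1 * t2 \<mu> * t1 \<mu> + G$2$2 * t2 \<mu> * t2 \<mu> = \<mu>^2 * (sd * sd) * Q"
      unfolding sdsq Qd gp a_def[symmetric] b_def[symmetric] c_def[symmetric] t1_def t2_def
      by (simp add: power2_eq_square algebra_simps)
    have h2: "w0 - t1 \<mu> * uu 2 + t2 \<mu> * uu 1 = w0 + \<mu> * Q"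
      unfolding Qd t1_def t2_def by (simp add: algebra_simps)
    show ?thesis unfolding V_Bst[OF G] h1 h2 sd_def ..
  qed
  have CB: "Cbeta \<beta> G \<rho> dR = c0 G - \<beta>^2 * Q / ss + \<beta> * (2 * sd * \<bar>w0\<bar>)" if "0 \<le> \<beta>" "\<beta> \<le> 1" for \<beta>
    using Cbeta_formula[OF G that] Q_def sd_def by simp
  have bh: "beta_hat G \<rho> dR = (if uu 1 = 0 \<and> uu 2 = 0 then \<infinity> else ereal ((2 * sd * \<bar>w0\<bar>) / (2 * (Q / ss))))"
    using beta_hat_formula[OF G] Q_def sd_def by simp
  show ?thesis
  proof (cases "uu 1 = 0 \<and> uu 2 = 0")
    case True
    then have Q0: "Q = 0" using Qd by simp
    have bs: "bstar G = 1" unfolding bstar_def bh using True by simp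
    have "Re (mtr (cmat G ** Zmat \<rho> (Bst (t1 0) (t2 0)))) + mtr (mabs (msqrt G ** mIm (Zmat \<rho> (Bst (t1 0) (t2 0))) ** msqrt G))
        = Cbeta 1 G \<rho> dR" unfolding V using CB[of 1] Q0 by simp
    then show ?thesis unfolding bs by auto
  next
    case False
    then have Qp: "0 < Q" using QQ_pos[OF G] Q_def by simp
    define bh' where "bh' = (2 * sd * \<bar>w0\<bar>) / (2 * (Q / ss))"
    have bh'e: "bh' = ss * sd * \<bar>w0\<bar> / Q" unfolding bh'_def using Qp ss0 by (simp add: field_simps)
    have bh'0: "0 \<le> bh'" unfolding bh'e using Qp ss0 sd0 by simp
    have bhe: "beta_hat G \<rho> dR = ereal bh'" unfolding bh bh'_def using False by simp
    show ?thesis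
    proof (cases "1 \<le> bh'")
      case True
      have bs: "bstar G = 1" unfolding bstar_def bhe using True by simp
      define k where "k = Q / (ss * sd)"
      have k0: "0 < k" unfolding k_def using Qp ss0 sd0 by simp
      have kw: "k \<le> \<bar>w0\<bar>" using True unfolding bh'e k_def using Qp ss0 sd0 by (simp add: field_simps)
      have absk: "\<bar>w0 + (- sgn w0 / (ss * sd)) * Q\<bar> = \<bar>w0\<bar> - k"
      proof -
        have "(- sgn w0 / (ss * sd)) * Q = - sgn w0 * k" unfolding k_def by simp
        then show ?thesis using kw k0 by (cases "w0 > 0"; cases "w0 < 0") (auto simp: sgn_if)
      qed
      have sgn2: "(sgn w0)^2 = 1" using kw k0 by (auto simp: sgn_if)
      have e: "c0 G + ss * ((- sgn w0 / (ss * sd))^2 * (sd * sd) * Q) + 2 * sd * \<bar>w0 + (- sgn w0 / (ss * sd)) * Q\<bar>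
          = c0 G - 1^2 * Q / ss + 1 * (2 * sd * \<bar>w0\<bar>)"
        unfolding absk k_def using ss0 sd0 sgn2 by (simp add: power2_eq_square field_simps)
      have "Re (mtr (cmat G ** Zmat \<rho> (Bst (t1 (- sgn w0 / (ss * sd))) (t2 (- sgn w0 / (ss * sd)))))) + mtr (mabs (msqrt G ** mIm (Zmat \<rho> (Bst (t1 (- sgn w0 / (ss * sd))) (t2 (- sgn w0 / (ss * sd))))) ** msqrt G))
        = Cbeta 1 G \<rho> dR" unfolding V e using CB[of 1] by simp
      then show ?thesis unfolding bs by auto
    next
      case False
      have bs: "bstar G = bh'" unfolding bstar_def bhe using False by simp
      have e: "c0 G + ss * ((- w0 / Q)^2 * (sd * sd) * Q) + 2 * sd * \<bar>w0 + (- w0 / Q) * Q\<bar>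
          = c0 G - bh'^2 * Q / ss + bh' * (2 * sd * \<bar>w0\<bar>)"
        unfolding bh'e using ss0 sd0 Qp by (simp add: power2_eq_square field_simps power_mult_distrib abs_mult_self_eq)
      have "Re (mtr (cmat G ** Zmat \<rho> (Bst (t1 (- w0 / Q)) (t2 (- w0 / Q))))) + mtr (mabs (msqrt G ** mIm (Zmat \<rho> (Bst (t1 (- w0 / Q)) (t2 (- w0 / Q)))) ** msqrt G))
        = Cbeta bh' G \<rho> dR" unfolding V e using CB[of bh'] bh'0 False by simp
      then show ?thesis unfolding bs using bh'0 False by auto
    qed
  qed
qed


lemma main:
  assumes G: "real_pos_def G"
  shows "holevo G \<rho> dR = Cbeta (bstar G) G \<rho> dR \<and> (SUP \<beta>\<in>{0..1}. Cbeta \<beta> G \<rho> dR) = Cbeta (bstar G) G \<rho> dR"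
proof -
  obtain t1 t2 where b0: "0 \<le> bstar G" and b1: "bstar G \<le> 1"
    and Vt: "Re (mtr (cmat G ** Zmat \<rho> (Bst t1 t2))) + mtr (mabs (msqrt G ** mIm (Zmat \<rho> (Bst t1 t2)) ** msqrt G)) = Cbeta (bstar G) G \<rho> dR"
    using attain[OF G] by blast
  have h: "holevo G \<rho> dR = Cbeta (bstar G) G \<rho> dR"
    unfolding holevo_def
  proof (rule cInf_eq_minimum)
    show "Cbeta (bstar G) G \<rho> dR \<in> {Re (mtr (cmat G ** Zmat \<rho> B)) + mtr (mabs (msqrt G ** mIm (Zmat \<rho> B) ** msqrt G)) |B.
          (\<forall>j. hermitian (B j)) \<and> (\<forall>i j. mtr (dR i ** B j) = (if i = j then 1 else 0))}"
      using Vt[symmetric] Bst_herm Bst_con by blast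
  next
    fix x assume "x \<in> {Re (mtr (cmat G ** Zmat \<rho> B)) + mtr (mabs (msqrt G ** mIm (Zmat \<rho> B) ** msqrt G)) |B.
          (\<forall>j. hermitian (B j)) \<and> (\<forall>i j. mtr (dR i ** B j) = (if i = j then 1 else 0))}"
    then obtain B where x: "x = Re (mtr (cmat G ** Zmat \<rho> B)) + mtr (mabs (msqrt G ** mIm (Zmat \<rho> B) ** msqrt G))"
      and Bh: "\<forall>j. hermitian (B j)" and Bc: "\<forall>i j. mtr (dR i ** B j) = (if i = j then 1 else 0)" by blast
    show "Cbeta (bstar G) G \<rho> dR \<le> x" unfolding x by (rule lower[OF Bh Bc G b0 b1])
  qed
  have s: "(SUP \<beta>\<in>{0..1}. Cbeta \<beta> G \<rho> dR) = Cbeta (bstar G) G \<rho> dR"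
  proof (rule cSup_eq_maximum)
    show "Cbeta (bstar G) G \<rho> dR \<in> (\<lambda>\<beta>. Cbeta \<beta> G \<rho> dR) ` {0..1}" using b0 b1 by simp
  next
    fix x assume "x \<in> (\<lambda>\<beta>. Cbeta \<beta> G \<rho> dR) ` {0..1}"
    then obtain \<beta> where x: "x = Cbeta \<beta> G \<rho> dR" and bb: "0 \<le> \<beta>" "\<beta> \<le> 1" by auto
    show "x \<le> Cbeta (bstar G) G \<rho> dR" unfolding x Vt[symmetric]
      by (rule lower[OF Bst_herm Bst_con G bb])
  qed
  show ?thesis using h s by simp
qed

end

theorem theorem7:
  fixes \<rho>\<^sub>\<theta> :: "real^2 \<Rightarrow> complex^'n^'n"
    and \<Theta> :: "(real^2) set" and \<theta>0 :: "real^2"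
    and D\<rho> :: "real^2 \<Rightarrow> complex^'n^'n"
    and T :: "(complex^'n^'n) set"
    and G :: "real^2^2"
  assumes "open \<Theta>" and "\<theta>0 \<in> \<Theta>"
    and "\<forall>\<theta>\<in>\<Theta>. density_op (\<rho>\<^sub>\<theta> \<theta>)"
    and "\<forall>\<theta>\<in>\<Theta>. \<rho>\<^sub>\<theta> differentiable (at \<theta>)"
    and "(\<rho>\<^sub>\<theta> has_derivative D\<rho>) (at \<theta>0)"
    and "strictly_pos (\<rho>\<^sub>\<theta> \<theta>0)"
    and "\<forall>a b::real. a *\<^sub>R logder 0 (\<rho>\<^sub>\<theta> \<theta>0) (D\<rho> (axis 1 1))
                   + b *\<^sub>R logder 0 (\<rho>\<^sub>\<theta> \<theta>0) (D\<rho> (axis 2 1)) = 0 \<longrightarrow> a = 0 \<and> b = 0"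
    and "subspace T" and "dim T = 3" and "\<forall>X\<in>T. hermitian X"
    and "span {logder 0 (\<rho>\<^sub>\<theta> \<theta>0) (D\<rho> (axis 1 1)), logder 0 (\<rho>\<^sub>\<theta> \<theta>0) (D\<rho> (axis 2 1))} \<subseteq> T"
    and "comm_op (\<rho>\<^sub>\<theta> \<theta>0) ` T \<subseteq> T"
    and "real_pos_def G"
  shows "holevo G (\<rho>\<^sub>\<theta> \<theta>0) (\<lambda>i. D\<rho> (axis i 1))
           = (SUP \<beta>\<in>{0..1}. Cbeta \<beta> G (\<rho>\<^sub>\<theta> \<theta>0) (\<lambda>i. D\<rho> (axis i 1)))
       \<and> (SUP \<beta>\<in>{0..1}. Cbeta \<beta> G (\<rho>\<^sub>\<theta> \<theta>0) (\<lambda>i. D\<rho> (axis i 1)))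
           = (if beta_hat G (\<rho>\<^sub>\<theta> \<theta>0) (\<lambda>i. D\<rho> (axis i 1)) \<ge> 1
              then Cbeta 1 G (\<rho>\<^sub>\<theta> \<theta>0) (\<lambda>i. D\<rho> (axis i 1))
              else Cbeta (real_of_ereal (beta_hat G (\<rho>\<^sub>\<theta> \<theta>0) (\<lambda>i. D\<rho> (axis i 1))))
                     G (\<rho>\<^sub>\<theta> \<theta>0) (\<lambda>i. D\<rho> (axis i 1)))"
proof -
  interpret S: setting "\<rho>\<^sub>\<theta> \<theta>0" "\<lambda>i. D\<rho> (axis i 1)" T
    by unfold_locales (use assms in simp_all)
  have m: "holevo G (\<rho>\<^sub>\<theta> \<theta>0) (\<lambda>i. D\<rho> (axis i 1)) = Cbeta (S.bstar G) G (\<rho>\<^sub>\<theta> \<theta>0) (\<lambda>i. D\<rho> (axis i 1))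
      \<and> (SUP \<beta>\<in>{0..1}. Cbeta \<beta> G (\<rho>\<^sub>\<theta> \<theta>0) (\<lambda>i. D\<rho> (axis i 1))) = Cbeta (S.bstar G) G (\<rho>\<^sub>\<theta> \<theta>0) (\<lambda>i. D\<rho> (axis i 1))"
    by (rule S.main) (rule assms(13))
  have b: "Cbeta (S.bstar G) G (\<rho>\<^sub>\<theta> \<theta>0) (\<lambda>i. D\<rho> (axis i 1))
      = (if beta_hat G (\<rho>\<^sub>\<theta> \<theta>0) (\<lambda>i. D\<rho> (axis i 1)) \<ge> 1
              then Cbeta 1 G (\<rho>\<^sub>\<theta> \<theta>0) (\<lambda>i. D\<rho> (axis i 1))
              else Cbeta (real_of_ereal (beta_hat G (\<rho>\<^sub>\<theta> \<theta>0) (\<lambda>i. D\<rho> (axis i 1))))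
                     G (\<rho>\<^sub>\<theta> \<theta>0) (\<lambda>i. D\<rho> (axis i 1)))"
    unfolding S.bstar_def by simp
  show ?thesis using m b by simp
qed


end
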